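(* Let $\mathcal{W}$ be a weakly exact structure on an additive category $\mathcal{A}$. Let $I$ be the class of admissible monics of $\mathcal{W}$ and $\mathcal{D}$ the class of admissible epics of $\mathcal{W}$. Then $I$ is a right weakly exact structure and $\mathcal{D}$ is a left weakly exact structure on $\mathcal{A}$. Consequently every weakly exact structure arises from a pair (left weakly exact structure, right weakly exact structure) by taking all kernel-cokernel pairs $(i,d)$ with $i\in I$, $d\in\mathcal{D}$.
   Context: Let $\mathcal{A}$ be an additive category. A kernel-cokernel pair (short exact sequence) is a pair of composable morphisms $A\xrightarrow{i}B\xrightarrow{d}C$ with $i$ a kernel of $d$ and $d$ a cokernel of $i$. A weakly exact structure on $\mathcal{A}$ is a class $\mathcal{W}$ of kernel-cokernel pairs, closed under isomorphisms of sequences and under finite direct sums of sequences, such that, calling $i$ an admissible monic (resp. $d$ an admissible epic) if $(i,d)\in\mathcal{W}$ for some $d$ (resp. some $i$): (E0) $1_A$ is an admissible monic for every object $A$; (E0)$^{op}$ $1_A$ is an admissible epic for every object $A$; (E2) for every admissible monic $i:A\to B$ and every morphism $t:A\to C$ the pushout of $i$ along $t$ exists and the resulting morphism $C\to S$ is an admissible monic; (E2)$^{op}$ for every admissible epic $h:A\to C$ and every morphism $t:B\to C$ the pullback of $h$ along $t$ exists and the resulting morphism $P\to B$ is an admissible epic. A right weakly exact structure on $\mathcal{A}$ is a class $I$ of morphisms that are kernels, closed under isomorphisms (of arrows), such that: (Id) for every object $X$, $1_X\in I$ and $0\to X$ is in $I$; (P) for every $f:X\to Y$ in $I$ and every morphism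 $h:X\to X'$ the pushout of $f$ along $h$ exists and the resulting morphism $f':X'\to Y'$ lies in $I$; (Q) if $A\xrightarrow{a}B\xrightarrow{b}C$ with $ba\in I$ and $a$ has a cokernel, then $a\in I$; (S) $I$ is closed under direct sums of morphisms. A left weakly exact structure is a class $\mathcal{D}$ of morphisms that are cokernels, closed under isomorphisms, satisfying the dual conditions: (Id$^{op}$) $1_X\in\mathcal{D}$ and $X\to 0$ is in $\mathcal{D}$ for all $X$; (P$^{op}$) pullbacks of morphisms in $\mathcal{D}$ along arbitrary morphisms exist and yield morphisms in $\mathcal{D}$; (Q$^{op}$) if $ba\in\mathcal{D}$ and $b$ has a kernel then $b\in\mathcal{D}$; (S$^{op}$) $\mathcal{D}$ is closed under direct sums of morphisms. *)

theory Defs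
  imports Main
begin

text \<open>Categories with explicit object and arrow carriers; composition
  Comp g f means g after f.  Additive structure on hom-sets.\<close>

record ('o,'m) addcat =
  Obj  :: "'o set"
  Arr  :: "'m set"
  Dom  :: "'m \<Rightarrow> 'o"
  Cod  :: "'m \<Rightarrow> 'o"
  Id   :: "'o \<Rightarrow> 'm"
  Comp :: "'m \<Rightarrow> 'm \<Rightarrow> 'm"
  Add  :: "'m \<Rightarrow> 'm \<Rightarrow> 'm"
  Zero :: "'o \<Rightarrow> 'o \<Rightarrow> 'm"
  Neg  :: "'m \<Rightarrow> 'm"

definition hom :: "('o,'m,'x) addcat_scheme \<Rightarrow> 'o \<Rightarrow> 'o \<Rightarrow> 'm set" where
  "hom C X Y = {f \<in> Arr C. Dom C f = X \<and> Cod C f = Y}"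

definition category :: "('o,'m,'x) addcat_scheme \<Rightarrow> bool" where
  "category C \<longleftrightarrow>
     (\<forall>f \<in> Arr C. Dom C f \<in> Obj C \<and> Cod C f \<in> Obj C) \<and>
     (\<forall>X \<in> Obj C. Id C X \<in> hom C X X) \<and>
     (\<forall>X \<in> Obj C. \<forall>Y \<in> Obj C. \<forall>Z \<in> Obj C. \<forall>f \<in> hom C X Y. \<forall>g \<in> hom C Y Z.
        Comp C g f \<in> hom C X Z) \<and>
     (\<forall>f \<in> Arr C. Comp C f (Id C (Dom C f)) = f \<and> Comp C (Id C (Cod C f)) f = f) \<and>
     (\<forall>f \<in> Arr C. \<forall>g \<in> Arr C. \<forall>h \<in> Arr C. Cod C f = Dom C g \<and> Cod C g = Dom C h \<longrightarrow>
        Comp C h (Comp C g f) = Comp C (Comp C h g) f)"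

definition preadditive :: "('o,'m,'x) addcat_scheme \<Rightarrow> bool" where
  "preadditive C \<longleftrightarrow> category C \<and>
     (\<forall>X \<in> Obj C. \<forall>Y \<in> Obj C.
        Zero C X Y \<in> hom C X Y \<and>
        (\<forall>f \<in> hom C X Y. \<forall>g \<in> hom C X Y. Add C f g \<in> hom C X Y) \<and>
        (\<forall>f \<in> hom C X Y. Neg C f \<in> hom C X Y) \<and>
        (\<forall>f \<in> hom C X Y. \<forall>g \<in> hom C X Y. \<forall>h \<in> hom C X Y.
           Add C (Add C f g) h = Add C f (Add C g h)) \<and>
        (\<forall>f \<in> hom C X Y. \<forall>g \<in> hom C X Y. Add C f g = Add C g f) \<and>
        (\<forall>f \<in> hom C X Y. Add C (Zero C X Y) f = f) \<and>
        (\<forall>f \<in> hom C X Y. Add C (Neg C f) f = Zero C X Y)) \<and>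
     (\<forall>X \<in> Obj C. \<forall>Y \<in> Obj C. \<forall>Z \<in> Obj C. \<forall>f \<in> hom C X Y. \<forall>g \<in> hom C X Y.
        \<forall>h \<in> hom C Y Z. Comp C h (Add C f g) = Add C (Comp C h f) (Comp C h g)) \<and>
     (\<forall>X \<in> Obj C. \<forall>Y \<in> Obj C. \<forall>Z \<in> Obj C. \<forall>f \<in> hom C X Y.
        \<forall>g \<in> hom C Y Z. \<forall>h \<in> hom C Y Z. Comp C (Add C g h) f = Add C (Comp C g f) (Comp C h f))"

text \<open>In a preadditive category, Z is a zero object iff its identity is zero.\<close>
definition zero_obj :: "('o,'m,'x) addcat_scheme \<Rightarrow> 'o \<Rightarrow> bool" where
  "zero_obj C Z \<longleftrightarrow> Z \<in> Obj C \<and> Id C Z = Zero C Z Z"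

definition biprod :: "('o,'m,'x) addcat_scheme \<Rightarrow> 'o \<Rightarrow> 'o \<Rightarrow> 'o \<Rightarrow> 'm \<Rightarrow> 'm \<Rightarrow> 'm \<Rightarrow> 'm \<Rightarrow> bool" where
  "biprod C A B S i1 i2 p1 p2 \<longleftrightarrow> S \<in> Obj C \<and>
     i1 \<in> hom C A S \<and> i2 \<in> hom C B S \<and> p1 \<in> hom C S A \<and> p2 \<in> hom C S B \<and>
     Comp C p1 i1 = Id C A \<and> Comp C p2 i2 = Id C B \<and>
     Comp C p2 i1 = Zero C A B \<and> Comp C p1 i2 = Zero C B A \<and>
     Add C (Comp C i1 p1) (Comp C i2 p2) = Id C S"

definition additive_category :: "('o,'m,'x) addcat_scheme \<Rightarrow> bool" where
  "additive_category C \<longleftrightarrow> preadditive C \<and> (\<exists>Z. zero_obj C Z) \<and>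
     (\<forall>A \<in> Obj C. \<forall>B \<in> Obj C. \<exists>S i1 i2 p1 p2. biprod C A B S i1 i2 p1 p2)"

text \<open>Direct sum f (+) g : S -> T of morphisms, relative to biproduct diagrams
  (S, _, _, p1, p2) of the sources and (T, j1, j2, _, _) of the targets.\<close>
definition dsum :: "('o,'m,'x) addcat_scheme \<Rightarrow> 'm \<Rightarrow> 'm \<Rightarrow> 'm \<Rightarrow> 'm \<Rightarrow> 'm \<Rightarrow> 'm \<Rightarrow> 'm" where
  "dsum C p1 p2 j1 j2 f g = Add C (Comp C j1 (Comp C f p1)) (Comp C j2 (Comp C g p2))"

definition iso :: "('o,'m,'x) addcat_scheme \<Rightarrow> 'm \<Rightarrow> bool" where
  "iso C f \<longleftrightarrow> f \<in> Arr C \<and> (\<exists>g \<in> hom C (Cod C f) (Dom C f).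
      Comp C g f = Id C (Dom C f) \<and> Comp C f g = Id C (Cod C f))"

definition is_kernel_of :: "('o,'m,'x) addcat_scheme \<Rightarrow> 'm \<Rightarrow> 'm \<Rightarrow> bool" where
  "is_kernel_of C i d \<longleftrightarrow> i \<in> Arr C \<and> d \<in> Arr C \<and> Cod C i = Dom C d \<and>
     Comp C d i = Zero C (Dom C i) (Cod C d) \<and>
     (\<forall>X \<in> Obj C. \<forall>g \<in> hom C X (Dom C d). Comp C d g = Zero C X (Cod C d) \<longrightarrow>
        (\<exists>!u. u \<in> hom C X (Dom C i) \<and> Comp C i u = g))"

definition is_cokernel_of :: "('o,'m,'x) addcat_scheme \<Rightarrow> 'm \<Rightarrow> 'm \<Rightarrow> bool" where
  "is_cokernel_of C d i \<longleftrightarrow> i \<in> Arr C \<and> d \<in> Arr C \<and> Cod C i = Dom C d \<and>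
     Comp C d i = Zero C (Dom C i) (Cod C d) \<and>
     (\<forall>X \<in> Obj C. \<forall>g \<in> hom C (Cod C i) X. Comp C g i = Zero C (Dom C i) X \<longrightarrow>
        (\<exists>!u. u \<in> hom C (Cod C d) X \<and> Comp C u d = g))"

definition kcpair :: "('o,'m,'x) addcat_scheme \<Rightarrow> 'm \<Rightarrow> 'm \<Rightarrow> bool" where
  "kcpair C i d \<longleftrightarrow> is_kernel_of C i d \<and> is_cokernel_of C d i"

definition is_kernel :: "('o,'m,'x) addcat_scheme \<Rightarrow> 'm \<Rightarrow> bool" where
  "is_kernel C i \<longleftrightarrow> (\<exists>d. is_kernel_of C i d)"

definition is_cokernel :: "('o,'m,'x) addcat_scheme \<Rightarrow> 'm \<Rightarrow> bool" where
  "is_cokernel C d \<longleftrightarrow> (\<exists>i. is_cokernel_of C d i)"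

definition has_kernel :: "('o,'m,'x) addcat_scheme \<Rightarrow> 'm \<Rightarrow> bool" where
  "has_kernel C d \<longleftrightarrow> (\<exists>i. is_kernel_of C i d)"

definition has_cokernel :: "('o,'m,'x) addcat_scheme \<Rightarrow> 'm \<Rightarrow> bool" where
  "has_cokernel C i \<longleftrightarrow> (\<exists>d. is_cokernel_of C d i)"

text \<open>Pushout square: f : X -> Y, h : X -> X', f' : X' -> Y', h' : Y -> Y',
  with h' o f = f' o h, universal.  f' is the pushout of f along h.\<close>
definition is_pushout :: "('o,'m,'x) addcat_scheme \<Rightarrow> 'm \<Rightarrow> 'm \<Rightarrow> 'm \<Rightarrow> 'm \<Rightarrow> bool" where
  "is_pushout C f h f' h' \<longleftrightarrow> f \<in> Arr C \<and> h \<in> Arr C \<and> f' \<in> Arr C \<and> h' \<in> Arr C \<and>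
     Dom C h = Dom C f \<and> Dom C f' = Cod C h \<and> Dom C h' = Cod C f \<and> Cod C h' = Cod C f' \<and>
     Comp C h' f = Comp C f' h \<and>
     (\<forall>Z \<in> Obj C. \<forall>u \<in> hom C (Cod C f) Z. \<forall>v \<in> hom C (Cod C h) Z.
        Comp C u f = Comp C v h \<longrightarrow>
        (\<exists>!w. w \<in> hom C (Cod C f') Z \<and> Comp C w h' = u \<and> Comp C w f' = v))"

text \<open>Pullback square: d : A -> Cc, t : B -> Cc, d' : P -> B, t' : P -> A,
  with d o t' = t o d', universal.  d' is the pullback of d along t.\<close>
definition is_pullback :: "('o,'m,'x) addcat_scheme \<Rightarrow> 'm \<Rightarrow> 'm \<Rightarrow> 'm \<Rightarrow> 'm \<Rightarrow> bool" where
  "is_pullback C d t d' t' \<longleftrightarrow> d \<in> Arr C \<and> t \<in> Arr C \<and> d' \<in> Arr C \<and> t' \<in> Arr C \<and>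
     Cod C t = Cod C d \<and> Cod C d' = Dom C t \<and> Cod C t' = Dom C d \<and> Dom C t' = Dom C d' \<and>
     Comp C d t' = Comp C t d' \<and>
     (\<forall>Z \<in> Obj C. \<forall>u \<in> hom C Z (Dom C d). \<forall>v \<in> hom C Z (Dom C t).
        Comp C d u = Comp C t v \<longrightarrow>
        (\<exists>!w. w \<in> hom C Z (Dom C d') \<and> Comp C t' w = u \<and> Comp C d' w = v))"

definition pushout_stable :: "('o,'m,'x) addcat_scheme \<Rightarrow> 'm set \<Rightarrow> bool" where
  "pushout_stable C K \<longleftrightarrow> (\<forall>f \<in> K. \<forall>h \<in> Arr C. Dom C h = Dom C f \<longrightarrow>
     (\<exists>f' h'. is_pushout C f h f' h') \<and> (\<forall>f' h'. is_pushout C f h f' h' \<longrightarrow> f' \<in> K))"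

definition pullback_stable :: "('o,'m,'x) addcat_scheme \<Rightarrow> 'm set \<Rightarrow> bool" where
  "pullback_stable C K \<longleftrightarrow> (\<forall>d \<in> K. \<forall>t \<in> Arr C. Cod C t = Cod C d \<longrightarrow>
     (\<exists>d' t'. is_pullback C d t d' t') \<and> (\<forall>d' t'. is_pullback C d t d' t' \<longrightarrow> d' \<in> K))"

definition iso_closed :: "('o,'m,'x) addcat_scheme \<Rightarrow> 'm set \<Rightarrow> bool" where
  "iso_closed C K \<longleftrightarrow> (\<forall>f \<in> K. \<forall>a b. iso C a \<and> iso C b \<and> Cod C a = Dom C f \<and> Dom C b = Cod C f
      \<longrightarrow> Comp C b (Comp C f a) \<in> K)"

definition dsum_closed :: "('o,'m,'x) addcat_scheme \<Rightarrow> 'm set \<Rightarrow> bool" where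
  "dsum_closed C K \<longleftrightarrow> (\<forall>f \<in> K. \<forall>g \<in> K. \<forall>S i1 i2 p1 p2 T j1 j2 q1 q2.
      biprod C (Dom C f) (Dom C g) S i1 i2 p1 p2 \<and> biprod C (Cod C f) (Cod C g) T j1 j2 q1 q2
      \<longrightarrow> dsum C p1 p2 j1 j2 f g \<in> K)"

definition right_weakly_exact :: "('o,'m,'x) addcat_scheme \<Rightarrow> 'm set \<Rightarrow> bool" where
  "right_weakly_exact C I \<longleftrightarrow>
     (\<forall>f \<in> I. is_kernel C f) \<and> iso_closed C I \<and>
     (\<forall>X \<in> Obj C. Id C X \<in> I \<and> (\<forall>Z f. zero_obj C Z \<and> f \<in> hom C Z X \<longrightarrow> f \<in> I)) \<and>
     pushout_stable C I \<and>
     (\<forall>a \<in> Arr C. \<forall>b \<in> Arr C. Cod C a = Dom C b \<and> Comp C b a \<in> I \<and> has_cokernel C a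
        \<longrightarrow> a \<in> I) \<and>
     dsum_closed C I"

definition left_weakly_exact :: "('o,'m,'x) addcat_scheme \<Rightarrow> 'm set \<Rightarrow> bool" where
  "left_weakly_exact C D \<longleftrightarrow>
     (\<forall>f \<in> D. is_cokernel C f) \<and> iso_closed C D \<and>
     (\<forall>X \<in> Obj C. Id C X \<in> D \<and> (\<forall>Z f. zero_obj C Z \<and> f \<in> hom C X Z \<longrightarrow> f \<in> D)) \<and>
     pullback_stable C D \<and>
     (\<forall>a \<in> Arr C. \<forall>b \<in> Arr C. Cod C a = Dom C b \<and> Comp C b a \<in> D \<and> has_kernel C b
        \<longrightarrow> b \<in> D) \<and>
     dsum_closed C D"

definition adm_monics :: "('m \<times> 'm) set \<Rightarrow> 'm set" where
  "adm_monics W = fst ` W"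

definition adm_epics :: "('m \<times> 'm) set \<Rightarrow> 'm set" where
  "adm_epics W = snd ` W"

definition weakly_exact :: "('o,'m,'x) addcat_scheme \<Rightarrow> ('m \<times> 'm) set \<Rightarrow> bool" where
  "weakly_exact C W \<longleftrightarrow>
     (\<forall>(i,d) \<in> W. kcpair C i d) \<and>
     \<comment> \<open>closed under isomorphisms of sequences\<close>
     (\<forall>(i,d) \<in> W. \<forall>i' d' a b c. i' \<in> Arr C \<and> d' \<in> Arr C \<and> Cod C i' = Dom C d' \<and>
        iso C a \<and> iso C b \<and> iso C c \<and>
        a \<in> hom C (Dom C i) (Dom C i') \<and> b \<in> hom C (Cod C i) (Cod C i') \<and>
        c \<in> hom C (Cod C d) (Cod C d') \<and>
        Comp C b i = Comp C i' a \<and> Comp C c d = Comp C d' b \<longrightarrow> (i',d') \<in> W) \<and>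
     \<comment> \<open>closed under finite direct sums: the empty sum and binary sums\<close>
     (\<forall>Z. zero_obj C Z \<longrightarrow> (Id C Z, Id C Z) \<in> W) \<and>
     (\<forall>(i,d) \<in> W. \<forall>(i',d') \<in> W. \<forall>SA a1 a2 r1 r2 SB b1 b2 s1 s2 SC c1 c2 t1 t2.
        biprod C (Dom C i) (Dom C i') SA a1 a2 r1 r2 \<and>
        biprod C (Cod C i) (Cod C i') SB b1 b2 s1 s2 \<and>
        biprod C (Cod C d) (Cod C d') SC c1 c2 t1 t2 \<longrightarrow>
        (dsum C r1 r2 b1 b2 i i', dsum C s1 s2 c1 c2 d d') \<in> W) \<and>
     \<comment> \<open>(E0), (E0 op)\<close>
     (\<forall>X \<in> Obj C. Id C X \<in> adm_monics W) \<and>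
     (\<forall>X \<in> Obj C. Id C X \<in> adm_epics W) \<and>
     \<comment> \<open>(E2), (E2 op)\<close>
     pushout_stable C (adm_monics W) \<and>
     pullback_stable C (adm_epics W)"

end

theory Submission imports Defs begin

locale addc =
  fixes C :: "('o,'m) addcat"
  assumes additive: "additive_category C"
begin

abbreviation cmp (infixr "\<cdot>" 70) where "g \<cdot> f \<equiv> Comp C g f"
abbreviation pls (infixl "\<oplus>" 65) where "f \<oplus> g \<equiv> Add C f g"

lemma pre: "preadditive C" using additive unfolding additive_category_def by auto
lemma cat: "category C" using pre unfolding preadditive_def by auto

lemma hom_iff: "f \<in> hom C X Y \<longleftrightarrow> f \<in> Arr C \<and> Dom C f = X \<and> Cod C f = Y"
  unfolding hom_def by auto

lemma dom_obj[simp]: "f \<in> Arr C \<Longrightarrow> Dom C f \<in> Obj C"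
  and cod_obj[simp]: "f \<in> Arr C \<Longrightarrow> Cod C f \<in> Obj C"
  using cat unfolding category_def by auto

lemma id_hom: "X \<in> Obj C \<Longrightarrow> Id C X \<in> hom C X X"
  using cat unfolding category_def by simp

lemma id_arr[simp]: "X \<in> Obj C \<Longrightarrow> Id C X \<in> Arr C"
  and dom_id[simp]: "X \<in> Obj C \<Longrightarrow> Dom C (Id C X) = X"
  and cod_id[simp]: "X \<in> Obj C \<Longrightarrow> Cod C (Id C X) = X"
  using id_hom unfolding hom_iff by auto

lemma comp_hom: "X \<in> Obj C \<Longrightarrow> Y \<in> Obj C \<Longrightarrow> Z \<in> Obj C \<Longrightarrow> f \<in> hom C X Y \<Longrightarrow> g \<in> hom C Y Z \<Longrightarrow> g \<cdot> f \<in> hom C X Z"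
  using cat unfolding category_def by simp

lemma comp_arr[simp]: "f \<in> Arr C \<Longrightarrow> g \<in> Arr C \<Longrightarrow> Dom C g = Cod C f \<Longrightarrow> g \<cdot> f \<in> Arr C"
  and dom_comp[simp]: "f \<in> Arr C \<Longrightarrow> g \<in> Arr C \<Longrightarrow> Dom C g = Cod C f \<Longrightarrow> Dom C (g \<cdot> f) = Dom C f"
  and cod_comp[simp]: "f \<in> Arr C \<Longrightarrow> g \<in> Arr C \<Longrightarrow> Dom C g = Cod C f \<Longrightarrow> Cod C (g \<cdot> f) = Cod C g"
proof -
  assume a: "f \<in> Arr C" "g \<in> Arr C" "Dom C g = Cod C f"
  have "g \<cdot> f \<in> hom C (Dom C f) (Cod C g)"
    by (rule comp_hom[of _ "Cod C f"]) (use a in \<open>simp_all add: hom_iff\<close>)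
  then show "g \<cdot> f \<in> Arr C" "Dom C (g \<cdot> f) = Dom C f" "Cod C (g \<cdot> f) = Cod C g"
    unfolding hom_iff by auto
qed

lemma comp_id_r[simp]: "f \<in> Arr C \<Longrightarrow> X = Dom C f \<Longrightarrow> f \<cdot> Id C X = f"
  and comp_id_l[simp]: "f \<in> Arr C \<Longrightarrow> Y = Cod C f \<Longrightarrow> Id C Y \<cdot> f = f"
  using cat unfolding category_def by simp_all

lemma assoc[simp]: "f \<in> Arr C \<Longrightarrow> g \<in> Arr C \<Longrightarrow> h \<in> Arr C \<Longrightarrow> Dom C g = Cod C f \<Longrightarrow> Dom C h = Cod C g
  \<Longrightarrow> (h \<cdot> g) \<cdot> f = h \<cdot> (g \<cdot> f)"
  using cat unfolding category_def by simp

lemma zero_hom: "X \<in> Obj C \<Longrightarrow> Y \<in> Obj C \<Longrightarrow> Zero C X Y \<in> hom C X Y"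
  using pre unfolding preadditive_def by simp

lemma zero_arr[simp]: "X \<in> Obj C \<Longrightarrow> Y \<in> Obj C \<Longrightarrow> Zero C X Y \<in> Arr C"
  and dom_zero[simp]: "X \<in> Obj C \<Longrightarrow> Y \<in> Obj C \<Longrightarrow> Dom C (Zero C X Y) = X"
  and cod_zero[simp]: "X \<in> Obj C \<Longrightarrow> Y \<in> Obj C \<Longrightarrow> Cod C (Zero C X Y) = Y"
  using zero_hom unfolding hom_iff by auto

lemma ahom: "f \<in> Arr C \<Longrightarrow> f \<in> hom C (Dom C f) (Cod C f)" by (simp add: hom_iff)

lemmas pd = pre[unfolded preadditive_def]
lemmas P1 = pd[THEN conjunct2, THEN conjunct1]
lemmas P2 = pd[THEN conjunct2, THEN conjunct2, THEN conjunct1]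
lemmas P3 = pd[THEN conjunct2, THEN conjunct2, THEN conjunct2]

lemma P1i: "X \<in> Obj C \<Longrightarrow> Y \<in> Obj C \<Longrightarrow> Zero C X Y \<in> hom C X Y \<and>
        (\<forall>f \<in> hom C X Y. \<forall>g \<in> hom C X Y. Add C f g \<in> hom C X Y) \<and>
        (\<forall>f \<in> hom C X Y. Neg C f \<in> hom C X Y) \<and>
        (\<forall>f \<in> hom C X Y. \<forall>g \<in> hom C X Y. \<forall>h \<in> hom C X Y.
           Add C (Add C f g) h = Add C f (Add C g h)) \<and>
        (\<forall>f \<in> hom C X Y. \<forall>g \<in> hom C X Y. Add C f g = Add C g f) \<and>
        (\<forall>f \<in> hom C X Y. Add C (Zero C X Y) f = f) \<and>
        (\<forall>f \<in> hom C X Y. Add C (Neg C f) f = Zero C X Y)"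
  by (rule bspec[OF bspec[OF P1]])

lemma add_hom: "X \<in> Obj C \<Longrightarrow> Y \<in> Obj C \<Longrightarrow> f \<in> hom C X Y \<Longrightarrow> g \<in> hom C X Y \<Longrightarrow> f \<oplus> g \<in> hom C X Y"
  using P1i[THEN conjunct2, THEN conjunct1] by blast
lemma neg_hom: "X \<in> Obj C \<Longrightarrow> Y \<in> Obj C \<Longrightarrow> f \<in> hom C X Y \<Longrightarrow> Neg C f \<in> hom C X Y"
  using P1i[THEN conjunct2, THEN conjunct2, THEN conjunct1] by blast
lemma add_assoc_h: "X \<in> Obj C \<Longrightarrow> Y \<in> Obj C \<Longrightarrow> f \<in> hom C X Y \<Longrightarrow> g \<in> hom C X Y \<Longrightarrow> h \<in> hom C X Y \<Longrightarrow> (f \<oplus> g) \<oplus> h = f \<oplus> (g \<oplus> h)"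
  using P1i[THEN conjunct2, THEN conjunct2, THEN conjunct2, THEN conjunct1] by blast
lemma add_comm_h: "X \<in> Obj C \<Longrightarrow> Y \<in> Obj C \<Longrightarrow> f \<in> hom C X Y \<Longrightarrow> g \<in> hom C X Y \<Longrightarrow> f \<oplus> g = g \<oplus> f"
  using P1i[THEN conjunct2, THEN conjunct2, THEN conjunct2, THEN conjunct2, THEN conjunct1] by blast
lemma zero_add_h: "X \<in> Obj C \<Longrightarrow> Y \<in> Obj C \<Longrightarrow> f \<in> hom C X Y \<Longrightarrow> Zero C X Y \<oplus> f = f"
  using P1i[THEN conjunct2, THEN conjunct2, THEN conjunct2, THEN conjunct2, THEN conjunct2, THEN conjunct1] by blast
lemma neg_add_h: "X \<in> Obj C \<Longrightarrow> Y \<in> Obj C \<Longrightarrow> f \<in> hom C X Y \<Longrightarrow> Neg C f \<oplus> f = Zero C X Y"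
  using P1i[THEN conjunct2, THEN conjunct2, THEN conjunct2, THEN conjunct2, THEN conjunct2, THEN conjunct2] by blast
lemma comp_add_r_h: "X \<in> Obj C \<Longrightarrow> Y \<in> Obj C \<Longrightarrow> Z \<in> Obj C \<Longrightarrow> f \<in> hom C X Y \<Longrightarrow> g \<in> hom C X Y \<Longrightarrow> h \<in> hom C Y Z
  \<Longrightarrow> h \<cdot> (f \<oplus> g) = (h \<cdot> f) \<oplus> (h \<cdot> g)"
  using P2 by blast
lemma comp_add_l_h: "X \<in> Obj C \<Longrightarrow> Y \<in> Obj C \<Longrightarrow> Z \<in> Obj C \<Longrightarrow> f \<in> hom C X Y \<Longrightarrow> g \<in> hom C Y Z \<Longrightarrow> h \<in> hom C Y Z
  \<Longrightarrow> (g \<oplus> h) \<cdot> f = (g \<cdot> f) \<oplus> (h \<cdot> f)"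
  using P3 by blast

lemma add_arr[simp]: "f \<in> Arr C \<Longrightarrow> g \<in> Arr C \<Longrightarrow> Dom C g = Dom C f \<Longrightarrow> Cod C g = Cod C f \<Longrightarrow> f \<oplus> g \<in> Arr C"
  and dom_add[simp]: "f \<in> Arr C \<Longrightarrow> g \<in> Arr C \<Longrightarrow> Dom C g = Dom C f \<Longrightarrow> Cod C g = Cod C f \<Longrightarrow> Dom C (f \<oplus> g) = Dom C f"
  and cod_add[simp]: "f \<in> Arr C \<Longrightarrow> g \<in> Arr C \<Longrightarrow> Dom C g = Dom C f \<Longrightarrow> Cod C g = Cod C f \<Longrightarrow> Cod C (f \<oplus> g) = Cod C f"
proof -
  assume a: "f \<in> Arr C" "g \<in> Arr C" "Dom C g = Dom C f" "Cod C g = Cod C f"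
  have "f \<oplus> g \<in> hom C (Dom C f) (Cod C f)"
    by (rule add_hom) (use a in \<open>simp_all add: hom_iff\<close>)
  then show "f \<oplus> g \<in> Arr C" "Dom C (f \<oplus> g) = Dom C f" "Cod C (f \<oplus> g) = Cod C f"
    unfolding hom_iff by auto
qed

lemma neg_arr[simp]: "f \<in> Arr C \<Longrightarrow> Neg C f \<in> Arr C"
  and dom_neg[simp]: "f \<in> Arr C \<Longrightarrow> Dom C (Neg C f) = Dom C f"
  and cod_neg[simp]: "f \<in> Arr C \<Longrightarrow> Cod C (Neg C f) = Cod C f"
proof -
  assume a: "f \<in> Arr C"
  have "Neg C f \<in> hom C (Dom C f) (Cod C f)"
    by (rule neg_hom) (use a in \<open>simp_all add: hom_iff\<close>)
  then show "Neg C f \<in> Arr C" "Dom C (Neg C f) = Dom C f" "Cod C (Neg C f) = Cod C f"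
    unfolding hom_iff by auto
qed

lemma add_assoc: "f \<in> Arr C \<Longrightarrow> g \<in> Arr C \<Longrightarrow> h \<in> Arr C \<Longrightarrow> Dom C g = Dom C f \<Longrightarrow> Cod C g = Cod C f
  \<Longrightarrow> Dom C h = Dom C f \<Longrightarrow> Cod C h = Cod C f \<Longrightarrow> (f \<oplus> g) \<oplus> h = f \<oplus> (g \<oplus> h)"
  by (rule add_assoc_h[of "Dom C f" "Cod C f"]) (simp_all add: hom_iff)

lemma add_comm: "f \<in> Arr C \<Longrightarrow> g \<in> Arr C \<Longrightarrow> Dom C g = Dom C f \<Longrightarrow> Cod C g = Cod C f
  \<Longrightarrow> f \<oplus> g = g \<oplus> f"
  by (rule add_comm_h[of "Dom C f" "Cod C f"]) (simp_all add: hom_iff)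

lemma zero_add[simp]: "f \<in> Arr C \<Longrightarrow> X = Dom C f \<Longrightarrow> Y = Cod C f \<Longrightarrow> Zero C X Y \<oplus> f = f"
  by (rule zero_add_h) (simp_all add: hom_iff)

lemma neg_add[simp]: "f \<in> Arr C \<Longrightarrow> Neg C f \<oplus> f = Zero C (Dom C f) (Cod C f)"
  by (rule neg_add_h) (simp_all add: hom_iff)

lemma comp_add_r: "f \<in> Arr C \<Longrightarrow> g \<in> Arr C \<Longrightarrow> h \<in> Arr C \<Longrightarrow> Dom C g = Dom C f \<Longrightarrow> Cod C g = Cod C f
  \<Longrightarrow> Dom C h = Cod C f \<Longrightarrow> h \<cdot> (f \<oplus> g) = (h \<cdot> f) \<oplus> (h \<cdot> g)"
  by (rule comp_add_r_h[of "Dom C f" "Cod C f" "Cod C h"]) (simp_all add: hom_iff)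

lemma comp_add_l: "f \<in> Arr C \<Longrightarrow> g \<in> Arr C \<Longrightarrow> h \<in> Arr C \<Longrightarrow> Dom C h = Dom C g \<Longrightarrow> Cod C h = Cod C g
  \<Longrightarrow> Dom C g = Cod C f \<Longrightarrow> (g \<oplus> h) \<cdot> f = (g \<cdot> f) \<oplus> (h \<cdot> f)"
  by (rule comp_add_l_h[of "Dom C f" "Cod C f" "Cod C g"]) (simp_all add: hom_iff)

lemma add_zero[simp]: "f \<in> Arr C \<Longrightarrow> X = Dom C f \<Longrightarrow> Y = Cod C f \<Longrightarrow> f \<oplus> Zero C X Y = f"
  by (simp add: add_comm[of f])

lemma add_neg[simp]: "f \<in> Arr C \<Longrightarrow> f \<oplus> Neg C f = Zero C (Dom C f) (Cod C f)"
  by (simp add: add_comm[of f])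

lemma neg_unique: "x \<in> Arr C \<Longrightarrow> y \<in> Arr C \<Longrightarrow> Dom C y = Dom C x \<Longrightarrow> Cod C y = Cod C x
  \<Longrightarrow> x \<oplus> y = Zero C (Dom C x) (Cod C x) \<Longrightarrow> x = Neg C y"
proof -
  assume a: "x \<in> Arr C" "y \<in> Arr C" "Dom C y = Dom C x" "Cod C y = Cod C x"
    and e: "x \<oplus> y = Zero C (Dom C x) (Cod C x)"
  have "x = x \<oplus> (y \<oplus> Neg C y)" using a by simp
  also have "\<dots> = (x \<oplus> y) \<oplus> Neg C y" using a by (simp add: add_assoc)
  also have "\<dots> = Neg C y" using a e by simp
  finally show ?thesis .
qed

lemma idem_zero: "x \<in> Arr C \<Longrightarrow> x = x \<oplus> x \<Longrightarrow> x = Zero C (Dom C x) (Cod C x)"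
proof -
  assume a: "x \<in> Arr C" and e: "x = x \<oplus> x"
  have "Zero C (Dom C x) (Cod C x) = Neg C x \<oplus> x" using a by simp
  also have "\<dots> = Neg C x \<oplus> (x \<oplus> x)" using e by metis
  also have "\<dots> = (Neg C x \<oplus> x) \<oplus> x" using a by (intro add_assoc[symmetric]) simp_all
  also have "\<dots> = x" using a by simp
  finally show ?thesis by simp
qed

lemma comp_zero_r[simp]: "g \<in> Arr C \<Longrightarrow> X \<in> Obj C \<Longrightarrow> Y = Dom C g \<Longrightarrow> g \<cdot> Zero C X Y = Zero C X (Cod C g)"
proof -
  assume a: "g \<in> Arr C" "X \<in> Obj C" "Y = Dom C g"
  have "g \<cdot> Zero C X Y = g \<cdot> (Zero C X Y \<oplus> Zero C X Y)" using a by simp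
  also have "\<dots> = g \<cdot> Zero C X Y \<oplus> g \<cdot> Zero C X Y" using a by (intro comp_add_r) simp_all
  finally have e: "g \<cdot> Zero C X Y = g \<cdot> Zero C X Y \<oplus> g \<cdot> Zero C X Y" .
  have "g \<cdot> Zero C X Y = Zero C (Dom C (g \<cdot> Zero C X Y)) (Cod C (g \<cdot> Zero C X Y))"
    by (rule idem_zero[OF _ e]) (use a in simp)
  then show ?thesis using a by simp
qed

lemma comp_zero_l[simp]: "f \<in> Arr C \<Longrightarrow> Z \<in> Obj C \<Longrightarrow> Y = Cod C f \<Longrightarrow> Zero C Y Z \<cdot> f = Zero C (Dom C f) Z"
proof -
  assume a: "f \<in> Arr C" "Z \<in> Obj C" "Y = Cod C f"
  have "Zero C Y Z \<cdot> f = (Zero C Y Z \<oplus> Zero C Y Z) \<cdot> f" using a by simp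
  also have "\<dots> = Zero C Y Z \<cdot> f \<oplus> Zero C Y Z \<cdot> f" using a by (intro comp_add_l) simp_all
  finally have e: "Zero C Y Z \<cdot> f = Zero C Y Z \<cdot> f \<oplus> Zero C Y Z \<cdot> f" .
  have "Zero C Y Z \<cdot> f = Zero C (Dom C (Zero C Y Z \<cdot> f)) (Cod C (Zero C Y Z \<cdot> f))"
    by (rule idem_zero[OF _ e]) (use a in simp)
  then show ?thesis using a by simp
qed

lemma comp_neg_r: "f \<in> Arr C \<Longrightarrow> g \<in> Arr C \<Longrightarrow> Dom C g = Cod C f \<Longrightarrow> g \<cdot> Neg C f = Neg C (g \<cdot> f)"
proof -
  assume a: "f \<in> Arr C" "g \<in> Arr C" "Dom C g = Cod C f"
  have "g \<cdot> Neg C f \<oplus> g \<cdot> f = g \<cdot> (Neg C f \<oplus> f)" using a by (intro comp_add_r[symmetric]) simp_all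
  also have "\<dots> = Zero C (Dom C f) (Cod C g)" using a by simp
  finally have e: "g \<cdot> Neg C f \<oplus> g \<cdot> f = Zero C (Dom C f) (Cod C g)" .
  show ?thesis by (rule neg_unique) (use a e in simp_all)
qed

lemma comp_neg_l: "f \<in> Arr C \<Longrightarrow> g \<in> Arr C \<Longrightarrow> Dom C g = Cod C f \<Longrightarrow> Neg C g \<cdot> f = Neg C (g \<cdot> f)"
proof -
  assume a: "f \<in> Arr C" "g \<in> Arr C" "Dom C g = Cod C f"
  have "Neg C g \<cdot> f \<oplus> g \<cdot> f = (Neg C g \<oplus> g) \<cdot> f" using a by (intro comp_add_l[symmetric]) simp_all
  also have "\<dots> = Zero C (Dom C f) (Cod C g)" using a by simp
  finally have e: "Neg C g \<cdot> f \<oplus> g \<cdot> f = Zero C (Dom C f) (Cod C g)" .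
  show ?thesis by (rule neg_unique) (use a e in simp_all)
qed

lemma neg_neg[simp]: "f \<in> Arr C \<Longrightarrow> Neg C (Neg C f) = f"
  by (metis add_neg neg_unique neg_arr dom_neg cod_neg)


lemma neg_zero_sum: "x \<in> Arr C \<Longrightarrow> y \<in> Arr C \<Longrightarrow> Dom C y = Dom C x \<Longrightarrow> Cod C y = Cod C x
  \<Longrightarrow> x \<oplus> y = Zero C (Dom C x) (Cod C x) \<Longrightarrow> y = Neg C x"
  by (metis add_comm neg_unique)

lemma add_cancel_r: "x \<in> Arr C \<Longrightarrow> y \<in> Arr C \<Longrightarrow> z \<in> Arr C \<Longrightarrow> Dom C y = Dom C x \<Longrightarrow> Cod C y = Cod C x
  \<Longrightarrow> Dom C z = Dom C x \<Longrightarrow> Cod C z = Cod C x \<Longrightarrow> x \<oplus> y = z \<Longrightarrow> x = z \<oplus> Neg C y"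
proof -
  assume a: "x \<in> Arr C" "y \<in> Arr C" "z \<in> Arr C" "Dom C y = Dom C x" "Cod C y = Cod C x"
    "Dom C z = Dom C x" "Cod C z = Cod C x" and e: "x \<oplus> y = z"
  have "x = x \<oplus> (y \<oplus> Neg C y)" using a by simp
  also have "\<dots> = (x \<oplus> y) \<oplus> Neg C y" using a by (intro add_assoc[symmetric]) simp_all
  finally show ?thesis using e by simp
qed

lemma zero_obj_to: "zero_obj C Z \<Longrightarrow> u \<in> Arr C \<Longrightarrow> Cod C u = Z \<Longrightarrow> u = Zero C (Dom C u) Z"
  unfolding zero_obj_def by (metis comp_id_l comp_zero_l)

lemma zero_obj_from: "zero_obj C Z \<Longrightarrow> u \<in> Arr C \<Longrightarrow> Dom C u = Z \<Longrightarrow> u = Zero C Z (Cod C u)"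
  unfolding zero_obj_def by (metis comp_id_r comp_zero_r)

lemma iso_intro: "f \<in> Arr C \<Longrightarrow> g \<in> Arr C \<Longrightarrow> Dom C g = Cod C f \<Longrightarrow> Cod C g = Dom C f
  \<Longrightarrow> g \<cdot> f = Id C (Dom C f) \<Longrightarrow> f \<cdot> g = Id C (Cod C f) \<Longrightarrow> iso C f"
  unfolding iso_def hom_def by blast

lemma iso_inv: "iso C f \<Longrightarrow> \<exists>g. g \<in> Arr C \<and> Dom C g = Cod C f \<and> Cod C g = Dom C f \<and>
   g \<cdot> f = Id C (Dom C f) \<and> f \<cdot> g = Id C (Cod C f)"
  unfolding iso_def hom_def by blast

lemma iso_arr: "iso C f \<Longrightarrow> f \<in> Arr C" unfolding iso_def by auto

lemma iso_id: "X \<in> Obj C \<Longrightarrow> iso C (Id C X)"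
  by (rule iso_intro[of _ "Id C X"]) simp_all

lemma ker_basic: "is_kernel_of C i d \<Longrightarrow> i \<in> Arr C \<and> d \<in> Arr C \<and> Cod C i = Dom C d \<and>
   d \<cdot> i = Zero C (Dom C i) (Cod C d)"
  unfolding is_kernel_of_def by auto

lemma ker_fact: "is_kernel_of C i d \<Longrightarrow> g \<in> Arr C \<Longrightarrow> Cod C g = Dom C d \<Longrightarrow>
   d \<cdot> g = Zero C (Dom C g) (Cod C d) \<Longrightarrow> \<exists>u. u \<in> Arr C \<and> Dom C u = Dom C g \<and> Cod C u = Dom C i \<and> i \<cdot> u = g"
proof -
  assume k: "is_kernel_of C i d" and a: "g \<in> Arr C" "Cod C g = Dom C d" "d \<cdot> g = Zero C (Dom C g) (Cod C d)"
  have "g \<in> hom C (Dom C g) (Dom C d)" using a by (simp add: hom_iff)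
  then have "\<exists>!u. u \<in> hom C (Dom C g) (Dom C i) \<and> i \<cdot> u = g"
    using k a unfolding is_kernel_of_def by simp
  then show ?thesis by (auto simp: hom_iff)
qed

lemma ker_mono: "is_kernel_of C i d \<Longrightarrow> u1 \<in> Arr C \<Longrightarrow> u2 \<in> Arr C \<Longrightarrow> Cod C u1 = Dom C i \<Longrightarrow>
   Cod C u2 = Dom C i \<Longrightarrow> Dom C u2 = Dom C u1 \<Longrightarrow> i \<cdot> u1 = i \<cdot> u2 \<Longrightarrow> u1 = u2"
proof -
  assume k: "is_kernel_of C i d" and a: "u1 \<in> Arr C" "u2 \<in> Arr C" "Cod C u1 = Dom C i"
    "Cod C u2 = Dom C i" "Dom C u2 = Dom C u1" and e: "i \<cdot> u1 = i \<cdot> u2"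
  from ker_basic[OF k] have b: "i \<in> Arr C" "d \<in> Arr C" "Cod C i = Dom C d" "d \<cdot> i = Zero C (Dom C i) (Cod C d)"
    by auto
  have "d \<cdot> (i \<cdot> u1) = Zero C (Dom C u1) (Cod C d)"
    using a b by (simp flip: assoc)
  moreover have "i \<cdot> u1 \<in> hom C (Dom C u1) (Dom C d)" using a b by (simp add: hom_iff)
  ultimately have "\<exists>!u. u \<in> hom C (Dom C u1) (Dom C i) \<and> i \<cdot> u = i \<cdot> u1"
    using k a b unfolding is_kernel_of_def by simp
  then show ?thesis using a e by (auto simp: hom_iff)
qed

lemma cok_basic: "is_cokernel_of C d i \<Longrightarrow> i \<in> Arr C \<and> d \<in> Arr C \<and> Cod C i = Dom C d \<and>
   d \<cdot> i = Zero C (Dom C i) (Cod C d)"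
  unfolding is_cokernel_of_def by auto

lemma cok_fact: "is_cokernel_of C d i \<Longrightarrow> g \<in> Arr C \<Longrightarrow> Dom C g = Cod C i \<Longrightarrow>
   g \<cdot> i = Zero C (Dom C i) (Cod C g) \<Longrightarrow> \<exists>u. u \<in> Arr C \<and> Dom C u = Cod C d \<and> Cod C u = Cod C g \<and> u \<cdot> d = g"
proof -
  assume k: "is_cokernel_of C d i" and a: "g \<in> Arr C" "Dom C g = Cod C i" "g \<cdot> i = Zero C (Dom C i) (Cod C g)"
  have "g \<in> hom C (Cod C i) (Cod C g)" using a by (simp add: hom_iff)
  then have "\<exists>!u. u \<in> hom C (Cod C d) (Cod C g) \<and> u \<cdot> d = g"
    using k a unfolding is_cokernel_of_def by simp
  then show ?thesis by (auto simp: hom_iff)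
qed

lemma cok_epi: "is_cokernel_of C d i \<Longrightarrow> u1 \<in> Arr C \<Longrightarrow> u2 \<in> Arr C \<Longrightarrow> Dom C u1 = Cod C d \<Longrightarrow>
   Dom C u2 = Cod C d \<Longrightarrow> Cod C u2 = Cod C u1 \<Longrightarrow> u1 \<cdot> d = u2 \<cdot> d \<Longrightarrow> u1 = u2"
proof -
  assume k: "is_cokernel_of C d i" and a: "u1 \<in> Arr C" "u2 \<in> Arr C" "Dom C u1 = Cod C d"
    "Dom C u2 = Cod C d" "Cod C u2 = Cod C u1" and e: "u1 \<cdot> d = u2 \<cdot> d"
  from cok_basic[OF k] have b: "i \<in> Arr C" "d \<in> Arr C" "Cod C i = Dom C d" "d \<cdot> i = Zero C (Dom C i) (Cod C d)"
    by auto
  have "(u1 \<cdot> d) \<cdot> i = Zero C (Dom C i) (Cod C u1)"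
    using a b by simp
  moreover have "u1 \<cdot> d \<in> hom C (Cod C i) (Cod C u1)" using a b by (simp add: hom_iff)
  ultimately have "\<exists>!u. u \<in> hom C (Cod C d) (Cod C u1) \<and> u \<cdot> d = u1 \<cdot> d"
    using k a b unfolding is_cokernel_of_def by simp
  then show ?thesis using a e by (auto simp: hom_iff)
qed

lemma bp_basic: assumes "biprod C A B S i1 i2 p1 p2"
  shows "S \<in> Obj C" "A \<in> Obj C" "B \<in> Obj C" "i1 \<in> Arr C" "i2 \<in> Arr C" "p1 \<in> Arr C" "p2 \<in> Arr C"
    "Dom C i1 = A" "Cod C i1 = S" "Dom C i2 = B" "Cod C i2 = S"
    "Dom C p1 = S" "Cod C p1 = A" "Dom C p2 = S" "Cod C p2 = B"
    "p1 \<cdot> i1 = Id C A" "p2 \<cdot> i2 = Id C B" "p2 \<cdot> i1 = Zero C A B" "p1 \<cdot> i2 = Zero C B A"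
    "i1 \<cdot> p1 \<oplus> i2 \<cdot> p2 = Id C S"
  using assms unfolding biprod_def hom_iff by (auto dest: dom_obj)

lemma bp_ext_out: assumes bp: "biprod C A B S i1 i2 p1 p2" and a: "x \<in> Arr C" "y \<in> Arr C" "Dom C x = S" "Dom C y = S"
   "Cod C y = Cod C x" "x \<cdot> i1 = y \<cdot> i1" "x \<cdot> i2 = y \<cdot> i2"
  shows "x = y"
proof -
  note b = bp_basic[OF bp]
  have "x = x \<cdot> (i1 \<cdot> p1 \<oplus> i2 \<cdot> p2)" using a b by simp
  also have "\<dots> = (x \<cdot> i1) \<cdot> p1 \<oplus> (x \<cdot> i2) \<cdot> p2" using a(1-5) b by (subst comp_add_r) simp_all
  also have "\<dots> = (y \<cdot> i1) \<cdot> p1 \<oplus> (y \<cdot> i2) \<cdot> p2" by (simp only: a(6) a(7))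
  also have "\<dots> = y \<cdot> (i1 \<cdot> p1 \<oplus> i2 \<cdot> p2)" using a b by (subst comp_add_r) simp_all
  also have "\<dots> = y" using a b by simp
  finally show ?thesis .
qed

lemma bp_ext_in: assumes bp: "biprod C A B S i1 i2 p1 p2" and a: "x \<in> Arr C" "y \<in> Arr C" "Cod C x = S" "Cod C y = S"
   "Dom C y = Dom C x" "p1 \<cdot> x = p1 \<cdot> y" "p2 \<cdot> x = p2 \<cdot> y"
  shows "x = y"
proof -
  note b = bp_basic[OF bp]
  have "x = (i1 \<cdot> p1 \<oplus> i2 \<cdot> p2) \<cdot> x" using a b by simp
  also have "\<dots> = i1 \<cdot> (p1 \<cdot> x) \<oplus> i2 \<cdot> (p2 \<cdot> x)" using a(1-5) b by (subst comp_add_l) simp_all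
  also have "\<dots> = i1 \<cdot> (p1 \<cdot> y) \<oplus> i2 \<cdot> (p2 \<cdot> y)" by (simp only: a(6) a(7))
  also have "\<dots> = (i1 \<cdot> p1 \<oplus> i2 \<cdot> p2) \<cdot> y" using a b by (subst comp_add_l) simp_all
  also have "\<dots> = y" using a b by simp
  finally show ?thesis .
qed

lemma bp_in: assumes bp: "biprod C A B S i1 i2 p1 p2" and a: "u \<in> Arr C" "v \<in> Arr C" "Cod C u = A" "Cod C v = B"
   "Dom C v = Dom C u"
  shows "p1 \<cdot> (i1 \<cdot> u \<oplus> i2 \<cdot> v) = u" "p2 \<cdot> (i1 \<cdot> u \<oplus> i2 \<cdot> v) = v"
    "i1 \<cdot> u \<oplus> i2 \<cdot> v \<in> Arr C" "Dom C (i1 \<cdot> u \<oplus> i2 \<cdot> v) = Dom C u" "Cod C (i1 \<cdot> u \<oplus> i2 \<cdot> v) = S"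
proof -
  note b = bp_basic[OF bp]
  show "p1 \<cdot> (i1 \<cdot> u \<oplus> i2 \<cdot> v) = u" using a b by (subst comp_add_r) (simp_all flip: assoc)
  show "p2 \<cdot> (i1 \<cdot> u \<oplus> i2 \<cdot> v) = v" using a b by (subst comp_add_r) (simp_all flip: assoc)
  show "i1 \<cdot> u \<oplus> i2 \<cdot> v \<in> Arr C" "Dom C (i1 \<cdot> u \<oplus> i2 \<cdot> v) = Dom C u" "Cod C (i1 \<cdot> u \<oplus> i2 \<cdot> v) = S"
    using a b by simp_all
qed

lemma bp_out: assumes bp: "biprod C A B S i1 i2 p1 p2" and a: "u \<in> Arr C" "v \<in> Arr C" "Dom C u = A" "Dom C v = B"
   "Cod C v = Cod C u"
  shows "(u \<cdot> p1 \<oplus> v \<cdot> p2) \<cdot> i1 = u" "(u \<cdot> p1 \<oplus> v \<cdot> p2) \<cdot> i2 = v"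
    "u \<cdot> p1 \<oplus> v \<cdot> p2 \<in> Arr C" "Dom C (u \<cdot> p1 \<oplus> v \<cdot> p2) = S" "Cod C (u \<cdot> p1 \<oplus> v \<cdot> p2) = Cod C u"
proof -
  note b = bp_basic[OF bp]
  show "(u \<cdot> p1 \<oplus> v \<cdot> p2) \<cdot> i1 = u" using a b by (subst comp_add_l) simp_all
  show "(u \<cdot> p1 \<oplus> v \<cdot> p2) \<cdot> i2 = v" using a b by (subst comp_add_l) simp_all
  show "u \<cdot> p1 \<oplus> v \<cdot> p2 \<in> Arr C" "Dom C (u \<cdot> p1 \<oplus> v \<cdot> p2) = S" "Cod C (u \<cdot> p1 \<oplus> v \<cdot> p2) = Cod C u"
    using a b by simp_all
qed

lemma bp_exists: "A \<in> Obj C \<Longrightarrow> B \<in> Obj C \<Longrightarrow> \<exists>S i1 i2 p1 p2. biprod C A B S i1 i2 p1 p2"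
  using additive unfolding additive_category_def by blast

end


locale wexc = addc C for C :: "('o,'m) addcat" +
  fixes W :: "('m \<times> 'm) set"
  assumes wex: "weakly_exact C W"
begin

abbreviation "II \<equiv> adm_monics W"
abbreviation "DD \<equiv> adm_epics W"

lemmas wx = wex[unfolded weakly_exact_def]
lemmas wx1 = wx[THEN conjunct1] and wx2 = wx[THEN conjunct2, THEN conjunct1]
  and wx3 = wx[THEN conjunct2, THEN conjunct2, THEN conjunct1]
  and wx4 = wx[THEN conjunct2, THEN conjunct2, THEN conjunct2, THEN conjunct1]
  and wx5 = wx[THEN conjunct2, THEN conjunct2, THEN conjunct2, THEN conjunct2, THEN conjunct1]
  and wx6 = wx[THEN conjunct2, THEN conjunct2, THEN conjunct2, THEN conjunct2, THEN conjunct2, THEN conjunct1]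
  and wx7 = wx[THEN conjunct2, THEN conjunct2, THEN conjunct2, THEN conjunct2, THEN conjunct2, THEN conjunct2, THEN conjunct1]
  and wx8 = wx[THEN conjunct2, THEN conjunct2, THEN conjunct2, THEN conjunct2, THEN conjunct2, THEN conjunct2, THEN conjunct2]

lemma W_kc: "(i,d) \<in> W \<Longrightarrow> kcpair C i d"
  using bspec[OF wx1, of "(i,d)", unfolded prod.case] by simp

lemma W_iso: "(i,d) \<in> W \<Longrightarrow> i' \<in> Arr C \<Longrightarrow> d' \<in> Arr C \<Longrightarrow> Cod C i' = Dom C d' \<Longrightarrow>
        iso C a \<Longrightarrow> iso C b \<Longrightarrow> iso C c \<Longrightarrow>
        a \<in> hom C (Dom C i) (Dom C i') \<Longrightarrow> b \<in> hom C (Cod C i) (Cod C i') \<Longrightarrow>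
        c \<in> hom C (Cod C d) (Cod C d') \<Longrightarrow>
        b \<cdot> i = i' \<cdot> a \<Longrightarrow> c \<cdot> d = d' \<cdot> b \<Longrightarrow> (i',d') \<in> W"
proof -
  assume "(i,d) \<in> W"
  moreover have "\<forall>(i,d) \<in> W. \<forall>i' d' a b c. i' \<in> Arr C \<and> d' \<in> Arr C \<and> Cod C i' = Dom C d' \<and>
        iso C a \<and> iso C b \<and> iso C c \<and>
        a \<in> hom C (Dom C i) (Dom C i') \<and> b \<in> hom C (Cod C i) (Cod C i') \<and>
        c \<in> hom C (Cod C d) (Cod C d') \<and>
        Comp C b i = Comp C i' a \<and> Comp C c d = Comp C d' b \<longrightarrow> (i',d') \<in> W"
    by (rule wx2)
  ultimately show "i' \<in> Arr C \<Longrightarrow> d' \<in> Arr C \<Longrightarrow> Cod C i' = Dom C d' \<Longrightarrow>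
        iso C a \<Longrightarrow> iso C b \<Longrightarrow> iso C c \<Longrightarrow>
        a \<in> hom C (Dom C i) (Dom C i') \<Longrightarrow> b \<in> hom C (Cod C i) (Cod C i') \<Longrightarrow>
        c \<in> hom C (Cod C d) (Cod C d') \<Longrightarrow>
        b \<cdot> i = i' \<cdot> a \<Longrightarrow> c \<cdot> d = d' \<cdot> b \<Longrightarrow> (i',d') \<in> W"
    by fast
qed

lemma W_sum: "(i,d) \<in> W \<Longrightarrow> (i',d') \<in> W \<Longrightarrow>
        biprod C (Dom C i) (Dom C i') SA a1 a2 r1 r2 \<Longrightarrow>
        biprod C (Cod C i) (Cod C i') SB b1 b2 s1 s2 \<Longrightarrow>
        biprod C (Cod C d) (Cod C d') SC c1 c2 t1 t2 \<Longrightarrow>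
        (dsum C r1 r2 b1 b2 i i', dsum C s1 s2 c1 c2 d d') \<in> W"
proof -
  assume "(i,d) \<in> W" "(i',d') \<in> W"
  moreover have "\<forall>(i,d) \<in> W. \<forall>(i',d') \<in> W. \<forall>SA a1 a2 r1 r2 SB b1 b2 s1 s2 SC c1 c2 t1 t2.
        biprod C (Dom C i) (Dom C i') SA a1 a2 r1 r2 \<and>
        biprod C (Cod C i) (Cod C i') SB b1 b2 s1 s2 \<and>
        biprod C (Cod C d) (Cod C d') SC c1 c2 t1 t2 \<longrightarrow>
        (dsum C r1 r2 b1 b2 i i', dsum C s1 s2 c1 c2 d d') \<in> W"
    by (rule wx4)
  ultimately show "biprod C (Dom C i) (Dom C i') SA a1 a2 r1 r2 \<Longrightarrow>
        biprod C (Cod C i) (Cod C i') SB b1 b2 s1 s2 \<Longrightarrow>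
        biprod C (Cod C d) (Cod C d') SC c1 c2 t1 t2 \<Longrightarrow>
        (dsum C r1 r2 b1 b2 i i', dsum C s1 s2 c1 c2 d d') \<in> W"
    by fast
qed

lemma E0: "X \<in> Obj C \<Longrightarrow> Id C X \<in> II" using wx5 by blast
lemma E0op: "X \<in> Obj C \<Longrightarrow> Id C X \<in> DD" using wx6 by blast
lemma E2: "pushout_stable C II" by (rule wx7)
lemma E2op: "pullback_stable C DD" by (rule wx8)

lemma I_W: "i \<in> II \<Longrightarrow> \<exists>d. (i,d) \<in> W" unfolding adm_monics_def by force
lemma D_W: "d \<in> DD \<Longrightarrow> \<exists>i. (i,d) \<in> W" unfolding adm_epics_def by force
lemma W_I: "(i,d) \<in> W \<Longrightarrow> i \<in> II" unfolding adm_monics_def by force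
lemma W_D: "(i,d) \<in> W \<Longrightarrow> d \<in> DD" unfolding adm_epics_def by force

lemma L: assumes kc: "kcpair C i d" and dD: "d \<in> DD" shows "(i,d) \<in> W"
proof -
  obtain k where kW: "(k,d) \<in> W" using D_W[OF dD] by blast
  have kk: "is_kernel_of C k d" using W_kc[OF kW] unfolding kcpair_def by simp
  have ik: "is_kernel_of C i d" using kc unfolding kcpair_def by simp
  note bk = ker_basic[OF kk] and bi = ker_basic[OF ik]
  obtain \<alpha> where al: "\<alpha> \<in> Arr C" "Dom C \<alpha> = Dom C i" "Cod C \<alpha> = Dom C k" "k \<cdot> \<alpha> = i"
    using ker_fact[OF kk, of i] bi by auto
  obtain \<beta> where be: "\<beta> \<in> Arr C" "Dom C \<beta> = Dom C k" "Cod C \<beta> = Dom C i" "i \<cdot> \<beta> = k"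
    using ker_fact[OF ik, of k] bk by auto
  have ba: "\<beta> \<cdot> \<alpha> = Id C (Dom C i)"
    by (rule ker_mono[OF ik]) (use al be bi in \<open>simp_all flip: assoc\<close>)
  have ab: "\<alpha> \<cdot> \<beta> = Id C (Dom C k)"
    by (rule ker_mono[OF kk]) (use al be bk in \<open>simp_all flip: assoc\<close>)
  have isb: "iso C \<beta>" by (rule iso_intro[of _ \<alpha>]) (use al be ba ab in simp_all)
  show ?thesis
    by (rule W_iso[OF kW, of i d \<beta> "Id C (Cod C k)" "Id C (Cod C d)"])
       (use bi bk be isb in \<open>simp_all add: iso_id hom_iff\<close>)
qed

lemma R_ker: "f \<in> II \<Longrightarrow> is_kernel C f"
  using I_W W_kc unfolding kcpair_def is_kernel_def by blast

lemma R_iso: "iso_closed C II"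
  unfolding iso_closed_def
proof (intro ballI allI impI, elim conjE)
  fix f a b assume fI: "f \<in> II" and ia: "iso C a" and ib: "iso C b" and ca: "Cod C a = Dom C f"
    and db: "Dom C b = Cod C f"
  obtain d where fW: "(f,d) \<in> W" using I_W[OF fI] by blast
  note bf = ker_basic[OF W_kc[OF fW, unfolded kcpair_def, THEN conjunct1]]
  obtain a' where a': "a' \<in> Arr C" "Dom C a' = Cod C a" "Cod C a' = Dom C a" "a' \<cdot> a = Id C (Dom C a)"
    "a \<cdot> a' = Id C (Cod C a)" using iso_inv[OF ia] by blast
  obtain b' where b': "b' \<in> Arr C" "Dom C b' = Cod C b" "Cod C b' = Dom C b" "b' \<cdot> b = Id C (Dom C b)"
    "b \<cdot> b' = Id C (Cod C b)" using iso_inv[OF ib] by blast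
  have ar: "a \<in> Arr C" "b \<in> Arr C" using ia ib iso_arr by auto
  have ia': "iso C a'" by (rule iso_intro[of _ a]) (use a' ar in simp_all)
  have "(b \<cdot> (f \<cdot> a), d \<cdot> b') \<in> W"
  proof (rule W_iso[OF fW, of _ _ a' b "Id C (Cod C d)"])
    show "b \<cdot> f = (b \<cdot> (f \<cdot> a)) \<cdot> a'" using a' ar bf ca db by simp
    show "Id C (Cod C d) \<cdot> d = (d \<cdot> b') \<cdot> b" using b' ar bf ca db by simp
  qed (use a' b' ar bf ca db ia' ib in \<open>simp_all add: iso_id hom_iff\<close>)
  then show "b \<cdot> (f \<cdot> a) \<in> II" by (rule W_I)
qed

lemma R_id: "X \<in> Obj C \<Longrightarrow> Id C X \<in> II" by (rule E0)

lemma R_zero: assumes z: "zero_obj C Z" and f: "f \<in> hom C Z X" shows "f \<in> II"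
proof -
  have fa: "f \<in> Arr C" "Dom C f = Z" "Cod C f = X" using f by (auto simp: hom_iff)
  have ZO: "Z \<in> Obj C" using z unfolding zero_obj_def by simp
  have XO: "X \<in> Obj C" using fa cod_obj by blast
  have f0: "Zero C Z X = f" using zero_obj_from[OF z fa(1,2)] fa by simp
  have idf: "Id C X \<cdot> f = Zero C (Dom C f) (Cod C (Id C X))" using fa XO f0 by simp
  have k: "is_kernel_of C f (Id C X)"
    unfolding is_kernel_of_def
  proof (intro conjI ballI impI)
    fix Y g assume Y: "Y \<in> Obj C" and g: "g \<in> hom C Y (Dom C (Id C X))"
      and g0: "Id C X \<cdot> g = Zero C Y (Cod C (Id C X))"
    have ga: "g \<in> Arr C" "Dom C g = Y" "Cod C g = X" using g XO by (auto simp: hom_iff)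
    have gz: "g = Zero C Y X" using g0 ga XO by simp
    have fz: "f \<cdot> Zero C Y Z = g" using Y ZO fa gz by simp
    show "\<exists>!u. u \<in> hom C Y (Dom C f) \<and> f \<cdot> u = g"
    proof (rule ex1I[of _ "Zero C Y Z"])
      show "Zero C Y Z \<in> hom C Y (Dom C f) \<and> f \<cdot> Zero C Y Z = g"
        using Y ZO fa fz by (simp add: hom_iff)
      fix u assume "u \<in> hom C Y (Dom C f) \<and> f \<cdot> u = g"
      then have "u \<in> Arr C" "Dom C u = Y" "Cod C u = Z" using fa by (auto simp: hom_iff)
      then show "u = Zero C Y Z" using zero_obj_to[OF z, of u] by simp
    qed
  qed (use fa XO idf in simp_all)
  have c: "is_cokernel_of C (Id C X) f"
    unfolding is_cokernel_of_def
  proof (intro conjI ballI impI)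
    fix Y g assume Y: "Y \<in> Obj C" and g: "g \<in> hom C (Cod C f) Y"
    have ga: "g \<in> Arr C" "Dom C g = X" "Cod C g = Y" using g fa by (auto simp: hom_iff)
    show "\<exists>!u. u \<in> hom C (Cod C (Id C X)) Y \<and> u \<cdot> Id C X = g"
    proof (rule ex1I[of _ g])
      show "g \<in> hom C (Cod C (Id C X)) Y \<and> g \<cdot> Id C X = g" using ga XO by (simp add: hom_iff)
      fix u assume "u \<in> hom C (Cod C (Id C X)) Y \<and> u \<cdot> Id C X = g"
      then show "u = g" using XO by (auto simp: hom_iff)
    qed
  qed (use fa XO idf in simp_all)
  have "(f, Id C X) \<in> W" using L[OF _ E0op[OF XO]] k c unfolding kcpair_def by blast
  then show ?thesis by (rule W_I)
qed

lemma R_po: "pushout_stable C II" by (rule E2)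

lemma R_sum: "dsum_closed C II"
  unfolding dsum_closed_def
proof (intro ballI allI impI, elim conjE)
  fix f g S i1 i2 p1 p2 T j1 j2 q1 q2
  assume fI: "f \<in> II" and gI: "g \<in> II" and b1: "biprod C (Dom C f) (Dom C g) S i1 i2 p1 p2"
    and b2: "biprod C (Cod C f) (Cod C g) T j1 j2 q1 q2"
  obtain d where fW: "(f,d) \<in> W" using I_W[OF fI] by blast
  obtain d' where gW: "(g,d') \<in> W" using I_W[OF gI] by blast
  have "d \<in> Arr C" "d' \<in> Arr C"
    using ker_basic W_kc[OF fW] W_kc[OF gW] unfolding kcpair_def by blast+
  then obtain U k1 k2 r1 r2 where "biprod C (Cod C d) (Cod C d') U k1 k2 r1 r2"
    using bp_exists by (meson cod_obj)
  from W_sum[OF fW gW b1 b2 this] show "dsum C p1 p2 j1 j2 f g \<in> II" by (rule W_I)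
qed


lemma R_Q: assumes aA: "a \<in> Arr C" and bA: "b \<in> Arr C" and ab: "Cod C a = Dom C b"
  and baI: "b \<cdot> a \<in> II" and hc: "has_cokernel C a"
  shows "a \<in> II"
proof -
  obtain d where iW: "(b \<cdot> a, d) \<in> W" using I_W[OF baI] by blast
  have ik: "is_kernel_of C (b \<cdot> a) d" and dc: "is_cokernel_of C d (b \<cdot> a)"
    using W_kc[OF iW] unfolding kcpair_def by auto
  have bi: "d \<in> Arr C" "Cod C b = Dom C d" "d \<cdot> (b \<cdot> a) = Zero C (Dom C a) (Cod C d)"
    using ker_basic[OF ik] aA bA ab by auto
  obtain q where qc: "is_cokernel_of C q a" using hc unfolding has_cokernel_def by blast
  have bq: "q \<in> Arr C" "Dom C q = Cod C a" "q \<cdot> a = Zero C (Dom C a) (Cod C q)"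
    using cok_basic[OF qc] by auto
  obtain S j1 j2 p1 p2 where bp: "biprod C (Cod C q) (Cod C b) S j1 j2 p1 p2"
    using bp_exists bq bA by (meson cod_obj)
  note B = bp_basic[OF bp]
  define a' where "a' = j1 \<cdot> q \<oplus> j2 \<cdot> b"
  note BI = bp_in[OF bp bq(1) bA refl refl, unfolded bq(2) ab, OF refl, folded a'_def]
  have a'A: "a' \<in> Arr C" "Dom C a' = Dom C b" "Cod C a' = S" "p1 \<cdot> a' = q" "p2 \<cdot> a' = b"
    using BI bq ab by auto
  have a'a: "a' \<cdot> a = j2 \<cdot> (b \<cdot> a)"
    unfolding a'_def using aA bA ab bq B by (subst comp_add_l) simp_all
  have po: "is_pushout C (b \<cdot> a) a a' j2"
    unfolding is_pushout_def
  proof (intro conjI ballI impI)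
    fix Z u v assume Z: "Z \<in> Obj C" and u: "u \<in> hom C (Cod C (b \<cdot> a)) Z" and v: "v \<in> hom C (Cod C a) Z"
      and e: "u \<cdot> (b \<cdot> a) = v \<cdot> a"
    have ua: "u \<in> Arr C" "Dom C u = Cod C b" "Cod C u = Z" using u aA bA ab by (auto simp: hom_iff)
    have va: "v \<in> Arr C" "Dom C v = Cod C a" "Cod C v = Z" using v by (auto simp: hom_iff)
    define g where "g = v \<oplus> Neg C (u \<cdot> b)"
    have ga: "g \<in> Arr C" "Dom C g = Cod C a" "Cod C g = Z" unfolding g_def using ua va bA ab by simp_all
    have g0: "g \<cdot> a = Zero C (Dom C a) (Cod C g)"
    proof -
      have "g \<cdot> a = v \<cdot> a \<oplus> Neg C (u \<cdot> b) \<cdot> a"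
        unfolding g_def using ua va bA ab aA by (subst comp_add_l) simp_all
      also have "\<dots> = v \<cdot> a \<oplus> Neg C (u \<cdot> (b \<cdot> a))"
        using ua va bA ab aA by (simp add: comp_neg_l)
      also have "\<dots> = Zero C (Dom C a) (Cod C g)" using e ua va bA ab aA ga by simp
      finally show ?thesis .
    qed
    obtain r where r: "r \<in> Arr C" "Dom C r = Cod C q" "Cod C r = Z" "r \<cdot> q = g"
      using cok_fact[OF qc ga(1)] ga g0 bq by auto
    define w where "w = r \<cdot> p1 \<oplus> u \<cdot> p2"
    note BO = bp_out[OF bp r(1) ua(1) r(2) ua(2), unfolded r(3) ua(3), OF refl, folded w_def]
    have wa': "w \<cdot> a' = v"
    proof -
      have "w \<cdot> a' = (w \<cdot> j1) \<cdot> q \<oplus> (w \<cdot> j2) \<cdot> b"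
        unfolding a'_def using BO B bq bA ab by (subst comp_add_r) (simp_all flip: assoc)
      also have "\<dots> = g \<oplus> u \<cdot> b" using BO r by simp
      also have "\<dots> = v \<oplus> (Neg C (u \<cdot> b) \<oplus> u \<cdot> b)" unfolding g_def
        using ua va bA ab by (intro add_assoc) simp_all
      also have "\<dots> = v" using ua va bA ab by simp
      finally show ?thesis .
    qed
    show "\<exists>!w. w \<in> hom C (Cod C a') Z \<and> w \<cdot> j2 = u \<and> w \<cdot> a' = v"
    proof (rule ex1I[of _ w])
      show "w \<in> hom C (Cod C a') Z \<and> w \<cdot> j2 = u \<and> w \<cdot> a' = v"
        using BO wa' a'A by (simp add: hom_iff)
      fix w' assume w': "w' \<in> hom C (Cod C a') Z \<and> w' \<cdot> j2 = u \<and> w' \<cdot> a' = v"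
      have w'a: "w' \<in> Arr C" "Dom C w' = S" "Cod C w' = Z" "w' \<cdot> j2 = u" "w' \<cdot> a' = v"
        using w' a'A by (auto simp: hom_iff)
      have eqv: "(w' \<cdot> j1) \<cdot> q \<oplus> u \<cdot> b = v"
      proof -
        have "v = w' \<cdot> a'" using w'a by simp
        also have "\<dots> = (w' \<cdot> j1) \<cdot> q \<oplus> (w' \<cdot> j2) \<cdot> b"
          unfolding a'_def using w'a(1-3) B bq bA ab by (subst comp_add_r) (simp_all flip: assoc)
        finally show ?thesis using w'a by simp
      qed
      have e1: "(w' \<cdot> j1) \<cdot> q = v \<oplus> Neg C (u \<cdot> b)"
        by (rule add_cancel_r[OF _ _ _ _ _ _ _ eqv]) (use w'a(1-3) B bq bA ab ua va in simp_all)
      have e2: "(w' \<cdot> j1) \<cdot> q = r \<cdot> q" using e1 r(4) unfolding g_def by simp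
      have wj1: "w' \<cdot> j1 = r"
        by (rule cok_epi[OF qc _ _ _ _ _ e2]) (use w'a(1-3) B bq r(1-3) in simp_all)
      have wj2: "w' \<cdot> j2 = w \<cdot> j2" using w'a(4) BO(2) by simp
      show "w' = w"
        by (rule bp_ext_out[OF bp _ _ _ _ _ _ wj2]) (use w'a(1-3) BO wj1 in simp_all)
    qed
  qed (use aA bA ab a'A B a'a in simp_all)
  have a'I: "a' \<in> II"
  proof -
    have "Dom C a = Dom C (b \<cdot> a)" using aA bA ab by simp
    from E2[unfolded pushout_stable_def, rule_format, OF baI aA this]
    show ?thesis using po by blast
  qed
  obtain e0 where a'W: "(a', e0) \<in> W" using I_W[OF a'I] by blast
  have ke: "is_kernel_of C a' e0" using W_kc[OF a'W] unfolding kcpair_def by simp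
  have be: "e0 \<in> Arr C" "Dom C e0 = S" "e0 \<cdot> a' = Zero C (Dom C b) (Cod C e0)"
    using ker_basic[OF ke] a'A by auto
  obtain t where t: "t \<in> Arr C" "Dom C t = Cod C q" "Cod C t = Cod C d" "t \<cdot> q = d \<cdot> b"
    using cok_fact[OF qc, of "d \<cdot> b"] bi bA ab aA by auto
  have "(e0 \<cdot> j2) \<cdot> (b \<cdot> a) = Zero C (Dom C (b \<cdot> a)) (Cod C (e0 \<cdot> j2))"
  proof -
    have "(e0 \<cdot> j2) \<cdot> (b \<cdot> a) = e0 \<cdot> (a' \<cdot> a)" using a'a be B aA bA ab by simp
    also have "\<dots> = Zero C (Dom C (b \<cdot> a)) (Cod C (e0 \<cdot> j2))" using be a'A aA bA ab B by (simp flip: assoc)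
    finally show ?thesis .
  qed
  then obtain \<phi> where ph: "\<phi> \<in> Arr C" "Dom C \<phi> = Cod C d" "Cod C \<phi> = Cod C e0" "\<phi> \<cdot> d = e0 \<cdot> j2"
    using cok_fact[OF dc, of "e0 \<cdot> j2"] be B aA bA ab by auto
  have s1: "e0 \<cdot> (j1 \<cdot> q) \<oplus> e0 \<cdot> (j2 \<cdot> b) = Zero C (Cod C a) (Cod C e0)"
  proof -
    have "e0 \<cdot> (j1 \<cdot> q) \<oplus> e0 \<cdot> (j2 \<cdot> b) = e0 \<cdot> a'"
      unfolding a'_def using be B bq bA ab by (subst comp_add_r) simp_all
    then show ?thesis using be ab by simp
  qed
  have s2: "e0 \<cdot> (j2 \<cdot> b) = \<phi> \<cdot> (t \<cdot> q)"
  proof -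
    have "e0 \<cdot> (j2 \<cdot> b) = (e0 \<cdot> j2) \<cdot> b" using be B bA by simp
    also have "\<dots> = (\<phi> \<cdot> d) \<cdot> b" by (simp only: ph(4))
    also have "\<dots> = \<phi> \<cdot> (d \<cdot> b)" using ph(1-3) bi bA by simp
    also have "\<dots> = \<phi> \<cdot> (t \<cdot> q)" by (simp only: t(4))
    finally show ?thesis .
  qed
  have s1': "e0 \<cdot> (j1 \<cdot> q) \<oplus> \<phi> \<cdot> (t \<cdot> q) = Zero C (Cod C a) (Cod C e0)"
    using s1 unfolding s2 .
  have ty1: "e0 \<cdot> (j1 \<cdot> q) \<in> Arr C" "Dom C (e0 \<cdot> (j1 \<cdot> q)) = Cod C a" "Cod C (e0 \<cdot> (j1 \<cdot> q)) = Cod C e0"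
    using be B bq by simp_all
  have ty2: "\<phi> \<cdot> (t \<cdot> q) \<in> Arr C" "Dom C (\<phi> \<cdot> (t \<cdot> q)) = Cod C a" "Cod C (\<phi> \<cdot> (t \<cdot> q)) = Cod C e0"
    using ph(1-3) t(1-3) bq by simp_all
  have s3: "e0 \<cdot> (j1 \<cdot> q) = Neg C (\<phi> \<cdot> (t \<cdot> q))"
    by (rule neg_unique) (use ty1 ty2 s1' in simp_all)
  have E: "(e0 \<cdot> j1) \<cdot> q = Neg C (\<phi> \<cdot> t) \<cdot> q"
  proof -
    have "(e0 \<cdot> j1) \<cdot> q = e0 \<cdot> (j1 \<cdot> q)" using be(1,2) B bq(1) by simp
    also have "\<dots> = Neg C (\<phi> \<cdot> (t \<cdot> q))" by (rule s3)
    also have "\<dots> = Neg C (\<phi> \<cdot> t) \<cdot> q" using ph(1-3) t(1-3) bq(1) by (simp add: comp_neg_l)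
    finally show ?thesis .
  qed
  have e0j1: "e0 \<cdot> j1 = Neg C (\<phi> \<cdot> t)"
    by (rule cok_epi[OF qc _ _ _ _ _ E]) (use be(1,2) B(1-15) bq(1,2) ph(1-3) t(1-3) in simp_all)
  have pb: "is_pullback C d t q b"
    unfolding is_pullback_def
  proof (intro conjI ballI impI)
    fix Z u v assume Z: "Z \<in> Obj C" and u: "u \<in> hom C Z (Dom C d)" and v: "v \<in> hom C Z (Dom C t)"
      and e: "d \<cdot> u = t \<cdot> v"
    have ua: "u \<in> Arr C" "Dom C u = Z" "Cod C u = Cod C b" using u bi by (auto simp: hom_iff)
    have va: "v \<in> Arr C" "Dom C v = Z" "Cod C v = Cod C q" using v t by (auto simp: hom_iff)
    define x where "x = j1 \<cdot> v \<oplus> j2 \<cdot> u"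
    note BX = bp_in[OF bp va(1) ua(1) va(3) ua(3), unfolded ua(2) va(2), OF refl, folded x_def]
    have ex: "e0 \<cdot> x = Zero C (Dom C x) (Cod C e0)"
    proof -
      have "e0 \<cdot> x = (e0 \<cdot> j1) \<cdot> v \<oplus> (e0 \<cdot> j2) \<cdot> u"
        unfolding x_def using be B ua va by (subst comp_add_r) (simp_all flip: assoc)
      also have "\<dots> = Neg C (\<phi> \<cdot> t) \<cdot> v \<oplus> (\<phi> \<cdot> d) \<cdot> u" by (simp only: e0j1 ph(4))
      also have "\<dots> = Neg C (\<phi> \<cdot> (t \<cdot> v)) \<oplus> \<phi> \<cdot> (t \<cdot> v)"
        using ph(1-3) t(1-3) ua va bi e by (simp add: comp_neg_l)
      also have "\<dots> = Zero C (Dom C x) (Cod C e0)" using ph(1-3) t(1-3) va BX by simp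
      finally show ?thesis .
    qed
    obtain w where w: "w \<in> Arr C" "Dom C w = Z" "Cod C w = Dom C a'" "a' \<cdot> w = x"
      using ker_fact[OF ke BX(3)] BX be ex by auto
    have qw: "q \<cdot> w = v"
    proof -
      have "q \<cdot> w = (p1 \<cdot> a') \<cdot> w" using a'A by simp
      also have "\<dots> = p1 \<cdot> x" using a'A(1-3) B w by simp
      finally show ?thesis using BX by simp
    qed
    have bw: "b \<cdot> w = u"
    proof -
      have "b \<cdot> w = (p2 \<cdot> a') \<cdot> w" using a'A by simp
      also have "\<dots> = p2 \<cdot> x" using a'A(1-3) B w by simp
      finally show ?thesis using BX by simp
    qed
    show "\<exists>!w. w \<in> hom C Z (Dom C q) \<and> b \<cdot> w = u \<and> q \<cdot> w = v"
    proof (rule ex1I[of _ w])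
      show "w \<in> hom C Z (Dom C q) \<and> b \<cdot> w = u \<and> q \<cdot> w = v"
        using w qw bw a'A bq ab by (simp add: hom_iff)
      fix w' assume w': "w' \<in> hom C Z (Dom C q) \<and> b \<cdot> w' = u \<and> q \<cdot> w' = v"
      have w'a: "w' \<in> Arr C" "Dom C w' = Z" "Cod C w' = Cod C a" "b \<cdot> w' = u" "q \<cdot> w' = v"
        using w' bq by (auto simp: hom_iff)
      have "a' \<cdot> w' = x"
        unfolding a'_def x_def using w'a B bq bA ab by (subst comp_add_l) simp_all
      then have ww: "a' \<cdot> w' = a' \<cdot> w" using w(4) by simp
      show "w' = w"
        by (rule ker_mono[OF ke _ _ _ _ _ ww]) (use w(1-3) w'a(1-3) a'A(1-3) ab in simp_all)
    qed
  qed (use bi t bq bA ab in simp_all)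
  have qD: "q \<in> DD"
  proof -
    from E2op[unfolded pullback_stable_def, rule_format, OF W_D[OF iW] t(1) t(3)]
    show ?thesis using pb by blast
  qed
  have ak: "is_kernel_of C a q"
    unfolding is_kernel_of_def
  proof (intro conjI ballI impI)
    fix X g assume X: "X \<in> Obj C" and g: "g \<in> hom C X (Dom C q)" and g0: "q \<cdot> g = Zero C X (Cod C q)"
    have ga: "g \<in> Arr C" "Dom C g = X" "Cod C g = Cod C a" using g bq by (auto simp: hom_iff)
    have "d \<cdot> (b \<cdot> g) = (d \<cdot> b) \<cdot> g" using bi bA ga ab by simp
    also have "\<dots> = (t \<cdot> q) \<cdot> g" using t by simp
    also have "\<dots> = t \<cdot> (q \<cdot> g)" using t(1-3) bq ga by simp
    also have "\<dots> = Zero C (Dom C (b \<cdot> g)) (Cod C d)" using g0 t(1-3) bq ga X bA ab by simp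
    finally have "d \<cdot> (b \<cdot> g) = Zero C (Dom C (b \<cdot> g)) (Cod C d)" .
    then obtain u where u: "u \<in> Arr C" "Dom C u = X" "Cod C u = Dom C a" "(b \<cdot> a) \<cdot> u = b \<cdot> g"
      using ker_fact[OF ik, of "b \<cdot> g"] ga bA ab bi aA by auto
    have au: "a \<cdot> u = g"
    proof (rule ker_mono[OF ke])
      have "a' \<cdot> (a \<cdot> u) = (a' \<cdot> a) \<cdot> u" using a'A aA u ab by simp
      also have "\<dots> = j2 \<cdot> ((b \<cdot> a) \<cdot> u)" using a'a B aA bA ab u(1-3) by simp
      also have "\<dots> = j2 \<cdot> (b \<cdot> g)" using u by simp
      also have "\<dots> = a' \<cdot> g"
        unfolding a'_def using ga B bq bA ab g0 X by (subst comp_add_l) simp_all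
      finally show "a' \<cdot> (a \<cdot> u) = a' \<cdot> g" .
    qed (use aA u ga a'A ab in simp_all)
    show "\<exists>!u. u \<in> hom C X (Dom C a) \<and> a \<cdot> u = g"
    proof (rule ex1I[of _ u])
      show "u \<in> hom C X (Dom C a) \<and> a \<cdot> u = g" using u au by (simp add: hom_iff)
      fix u' assume u': "u' \<in> hom C X (Dom C a) \<and> a \<cdot> u' = g"
      have u'a: "u' \<in> Arr C" "Dom C u' = X" "Cod C u' = Dom C a" "a \<cdot> u' = g"
        using u' by (auto simp: hom_iff)
      show "u' = u"
      proof (rule ker_mono[OF ik])
        show "(b \<cdot> a) \<cdot> u' = (b \<cdot> a) \<cdot> u" using u'a au aA bA ab u by simp
      qed (use u'a u aA bA ab in simp_all)
    qed
  qed (use aA bq in simp_all)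
  have "(a, q) \<in> W" using L[OF _ qD] ak qc unfolding kcpair_def by blast
  then show ?thesis by (rule W_I)
qed

lemma R_all: "right_weakly_exact C II"
  unfolding right_weakly_exact_def
proof (intro conjI ballI allI impI)
  show "\<And>f. f \<in> II \<Longrightarrow> is_kernel C f" by (rule R_ker)
  show "iso_closed C II" by (rule R_iso)
  show "\<And>X. X \<in> Obj C \<Longrightarrow> Id C X \<in> II" by (rule R_id)
  show "\<And>X Z f. X \<in> Obj C \<Longrightarrow> zero_obj C Z \<and> f \<in> hom C Z X \<Longrightarrow> f \<in> II" using R_zero by blast
  show "pushout_stable C II" by (rule R_po)
  show "\<And>a b. a \<in> Arr C \<Longrightarrow> b \<in> Arr C \<Longrightarrow> Cod C a = Dom C b \<and> b \<cdot> a \<in> II \<and> has_cokernel C a \<Longrightarrow> a \<in> II"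
    using R_Q by blast
  show "dsum_closed C II" by (rule R_sum)
qed

lemma W_char: "W = {(i,d). kcpair C i d \<and> i \<in> II \<and> d \<in> DD}"
proof
  show "W \<subseteq> {(i,d). kcpair C i d \<and> i \<in> II \<and> d \<in> DD}" using W_kc W_I W_D by auto
  show "{(i,d). kcpair C i d \<and> i \<in> II \<and> d \<in> DD} \<subseteq> W" using L by auto
qed
end


section \<open>Duality\<close>

definition opc :: "('o,'m) addcat \<Rightarrow> ('o,'m) addcat" where
  "opc C = \<lparr>Obj = Obj C, Arr = Arr C, Dom = Cod C, Cod = Dom C, Id = Id C,
            Comp = (\<lambda>g f. Comp C f g), Add = Add C, Zero = (\<lambda>X Y. Zero C Y X), Neg = Neg C\<rparr>"

lemma opc_simps[simp]: "Obj (opc C) = Obj C" "Arr (opc C) = Arr C" "Dom (opc C) = Cod C"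
  "Cod (opc C) = Dom C" "Id (opc C) = Id C" "Comp (opc C) g f = Comp C f g" "Add (opc C) = Add C"
  "Zero (opc C) X Y = Zero C Y X" "Neg (opc C) = Neg C"
  by (simp_all add: opc_def)

lemma opc_opc[simp]: "opc (opc C) = C"
  by (cases C) (simp add: opc_def)

lemma hom_op[simp]: "hom (opc C) X Y = hom C Y X" by (auto simp: hom_def)

lemma zero_obj_op[simp]: "zero_obj (opc C) Z = zero_obj C Z" by (simp add: zero_obj_def)

lemma biprod_op: "biprod (opc C) A B S i1 i2 p1 p2 = biprod C A B S p1 p2 i1 i2"
  unfolding biprod_def by auto

lemma iso_op[simp]: "iso (opc C) f = iso C f" unfolding iso_def by auto

lemma ker_op[simp]: "is_kernel_of (opc C) x y = is_cokernel_of C x y"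
  unfolding is_kernel_of_def is_cokernel_of_def by auto

lemma cok_op[simp]: "is_cokernel_of (opc C) x y = is_kernel_of C x y"
  unfolding is_kernel_of_def is_cokernel_of_def by auto

lemma kc_op: "kcpair (opc C) i d = kcpair C d i" unfolding kcpair_def by auto

lemma is_kernel_op: "is_kernel (opc C) f = is_cokernel C f"
  unfolding is_kernel_def is_cokernel_def by auto
lemma has_cokernel_op: "has_cokernel (opc C) f = has_kernel C f"
  unfolding has_kernel_def has_cokernel_def by auto

lemma po_op: "is_pushout (opc C) f h f' h' = is_pullback C f h f' h'"
  unfolding is_pushout_def is_pullback_def by auto

lemma pos_op: "pushout_stable (opc C) K = pullback_stable C K"
  unfolding pushout_stable_def pullback_stable_def po_op by auto

lemma pbs_op: "pullback_stable (opc C) K = pushout_stable C K"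
  using pos_op[of "opc C"] by simp

lemma adm_swap: "adm_monics (prod.swap ` W) = adm_epics W" "adm_epics (prod.swap ` W) = adm_monics W"
  unfolding adm_monics_def adm_epics_def image_image by simp_all

context addc
begin

lemma op_cat: "category (opc C)"
  unfolding category_def by (auto simp: hom_iff)

lemma op_pre: "preadditive (opc C)"
  unfolding preadditive_def
  by (auto simp: op_cat hom_iff comp_add_l comp_add_r add_assoc intro: add_comm)

lemma op_additive: "additive_category (opc C)"
  unfolding additive_category_def
proof (intro conjI ballI)
  show "preadditive (opc C)" by (rule op_pre)
  obtain Z where "zero_obj C Z" using additive unfolding additive_category_def by blast
  then show "\<exists>Z. zero_obj (opc C) Z" by auto
  fix A B assume "A \<in> Obj (opc C)" "B \<in> Obj (opc C)"
  then have "A \<in> Obj C" "B \<in> Obj C" by simp_all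
  then obtain S i1 i2 p1 p2 where "biprod C A B S i1 i2 p1 p2" using bp_exists by blast
  then show "\<exists>S i1 i2 p1 p2. biprod (opc C) A B S i1 i2 p1 p2" unfolding biprod_op by blast
qed

lemma iso_closed_from_op: assumes h: "iso_closed (opc C) K" and KA: "K \<subseteq> Arr C"
  shows "iso_closed C K"
  unfolding iso_closed_def
proof (intro ballI allI impI, elim conjE)
  fix f a b assume f: "f \<in> K" and ia: "iso C a" and ib: "iso C b" and ca: "Cod C a = Dom C f"
    and db: "Dom C b = Cod C f"
  have "Comp (opc C) a (Comp (opc C) f b) \<in> K"
    using h f ia ib ca db unfolding iso_closed_def by auto
  moreover have "Comp (opc C) a (Comp (opc C) f b) = b \<cdot> (f \<cdot> a)"
    using f KA iso_arr[OF ia] iso_arr[OF ib] ca db by auto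
  ultimately show "b \<cdot> (f \<cdot> a) \<in> K" by simp
qed

lemma dsum_op: "f \<in> Arr C \<Longrightarrow> g \<in> Arr C \<Longrightarrow> j1 \<in> Arr C \<Longrightarrow> j2 \<in> Arr C \<Longrightarrow> p1 \<in> Arr C \<Longrightarrow> p2 \<in> Arr C
  \<Longrightarrow> Cod C j1 = Dom C f \<Longrightarrow> Dom C p1 = Cod C f \<Longrightarrow> Cod C j2 = Dom C g \<Longrightarrow> Dom C p2 = Cod C g
  \<Longrightarrow> dsum (opc C) p1 p2 j1 j2 f g = dsum C j1 j2 p1 p2 f g"
  unfolding dsum_def by simp

lemma dsum_closed_from_op: assumes h: "dsum_closed (opc C) K" and KA: "K \<subseteq> Arr C"
  shows "dsum_closed C K"
  unfolding dsum_closed_def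
proof (intro ballI allI impI, elim conjE)
  fix f g S i1 i2 p1 p2 T j1 j2 q1 q2
  assume f: "f \<in> K" and g: "g \<in> K" and b1: "biprod C (Dom C f) (Dom C g) S i1 i2 p1 p2"
    and b2: "biprod C (Cod C f) (Cod C g) T j1 j2 q1 q2"
  have x1: "biprod (opc C) (Dom (opc C) f) (Dom (opc C) g) T q1 q2 j1 j2" using b2 by (simp add: biprod_op)
  have x2: "biprod (opc C) (Cod (opc C) f) (Cod (opc C) g) S p1 p2 i1 i2" using b1 by (simp add: biprod_op)
  have "dsum (opc C) j1 j2 p1 p2 f g \<in> K"
    using h[unfolded dsum_closed_def] f g x1 x2 by blast
  moreover have "dsum (opc C) j1 j2 p1 p2 f g = dsum C p1 p2 j1 j2 f g"
    using f g KA bp_basic[OF b1] bp_basic[OF b2] by (intro dsum_op) auto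
  ultimately show "dsum C p1 p2 j1 j2 f g \<in> K" by simp
qed

lemma left_from_op: assumes h: "right_weakly_exact (opc C) K" and KA: "K \<subseteq> Arr C"
  shows "left_weakly_exact C K"
proof -
  note r = h[unfolded right_weakly_exact_def]
  show ?thesis
    unfolding left_weakly_exact_def
  proof (intro conjI)
    show "\<forall>f\<in>K. is_cokernel C f" using r by (simp add: is_kernel_op)
    show "iso_closed C K" using r iso_closed_from_op KA by auto
    show "\<forall>X\<in>Obj C. Id C X \<in> K \<and> (\<forall>Z f. zero_obj C Z \<and> f \<in> hom C X Z \<longrightarrow> f \<in> K)"
      using r by auto
    show "pullback_stable C K" using r pos_op by auto
    show "\<forall>a\<in>Arr C. \<forall>b\<in>Arr C. Cod C a = Dom C b \<and> b \<cdot> a \<in> K \<and> has_kernel C b \<longrightarrow> b \<in> K"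
      using r[THEN conjunct2, THEN conjunct2, THEN conjunct2, THEN conjunct2, THEN conjunct1]
      unfolding has_cokernel_op by auto
    show "dsum_closed C K" using r dsum_closed_from_op KA by auto
  qed
qed

lemma sq_inv: assumes a: "x \<in> Arr C" "c \<in> Arr C" "b \<in> Arr C" "d' \<in> Arr C" "b' \<in> Arr C" "c' \<in> Arr C"
  "Cod C c = Dom C x" "Dom C d' = Dom C c" "Cod C d' = Dom C b" "Cod C b = Cod C x"
  "Dom C b' = Cod C x" "Cod C b' = Dom C b" "Dom C c' = Dom C x" "Cod C c' = Dom C c"
  "c \<cdot> c' = Id C (Dom C x)" "b' \<cdot> b = Id C (Dom C b)" and e: "x \<cdot> c = b \<cdot> d'"
  shows "b' \<cdot> x = d' \<cdot> c'"
proof -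
  have "b' \<cdot> x = b' \<cdot> (x \<cdot> (c \<cdot> c'))" using a by simp
  also have "\<dots> = b' \<cdot> ((x \<cdot> c) \<cdot> c')" using a by simp
  also have "\<dots> = b' \<cdot> ((b \<cdot> d') \<cdot> c')" by (simp only: e)
  also have "\<dots> = (b' \<cdot> b) \<cdot> (d' \<cdot> c')" using a(1-14) by simp
  also have "\<dots> = d' \<cdot> c'" using a by simp
  finally show ?thesis .
qed

end

context wexc
begin

lemma op_iso_clause: assumes xyW: "(x,y) \<in> W"
  shows "i' \<in> Arr (opc C) \<and> d' \<in> Arr (opc C) \<and> Cod (opc C) i' = Dom (opc C) d' \<and>
        iso (opc C) a \<and> iso (opc C) b \<and> iso (opc C) c \<and>
        a \<in> hom (opc C) (Dom (opc C) y) (Dom (opc C) i') \<and> b \<in> hom (opc C) (Cod (opc C) y) (Cod (opc C) i') \<and>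
        c \<in> hom (opc C) (Cod (opc C) x) (Cod (opc C) d') \<and>
        Comp (opc C) b y = Comp (opc C) i' a \<and> Comp (opc C) c x = Comp (opc C) d' b \<longrightarrow> (i',d') \<in> prod.swap ` W"
proof (intro impI, elim conjE)
  assume h: "i' \<in> Arr (opc C)" "d' \<in> Arr (opc C)"
      "Cod (opc C) i' = Dom (opc C) d'" "iso (opc C) a" "iso (opc C) b" "iso (opc C) c"
      and ha: "a \<in> hom (opc C) (Dom (opc C) y) (Dom (opc C) i')"
      and hb: "b \<in> hom (opc C) (Cod (opc C) y) (Cod (opc C) i')"
      and hc: "c \<in> hom (opc C) (Cod (opc C) x) (Cod (opc C) d')"
      and e1: "Comp (opc C) b y = Comp (opc C) i' a" and e2: "Comp (opc C) c x = Comp (opc C) d' b"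
  have xy: "(x,y) \<in> W" by (rule xyW)
  have kx: "kcpair C x y" using W_kc[OF xy(1)] .
  note bx = ker_basic[OF kx[unfolded kcpair_def, THEN conjunct1]]
  have ty: "i' \<in> Arr C" "d' \<in> Arr C" "Dom C i' = Cod C d'" "iso C a" "iso C b" "iso C c"
    using h by auto
  have ta: "a \<in> Arr C" "Dom C a = Cod C i'" "Cod C a = Cod C y" using ha xy by (auto simp: hom_iff)
  have tb: "b \<in> Arr C" "Dom C b = Dom C i'" "Cod C b = Dom C y" using hb xy by (auto simp: hom_iff)
  have tc: "c \<in> Arr C" "Dom C c = Dom C d'" "Cod C c = Dom C x" using hc xy by (auto simp: hom_iff)
  have e1': "y \<cdot> b = a \<cdot> i'" using e1 xy by simp
  have e2': "x \<cdot> c = b \<cdot> d'" using e2 xy by simp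
  obtain a' where a': "a' \<in> Arr C" "Dom C a' = Cod C a" "Cod C a' = Dom C a" "a' \<cdot> a = Id C (Dom C a)"
    "a \<cdot> a' = Id C (Cod C a)" using iso_inv[OF ty(4)] by blast
  obtain b' where b': "b' \<in> Arr C" "Dom C b' = Cod C b" "Cod C b' = Dom C b" "b' \<cdot> b = Id C (Dom C b)"
    "b \<cdot> b' = Id C (Cod C b)" using iso_inv[OF ty(5)] by blast
  obtain c' where c': "c' \<in> Arr C" "Dom C c' = Cod C c" "Cod C c' = Dom C c" "c' \<cdot> c = Id C (Dom C c)"
    "c \<cdot> c' = Id C (Cod C c)" using iso_inv[OF ty(6)] by blast
  have ia': "iso C a'" by (rule iso_intro[of _ a]) (use a' ta in simp_all)
  have ib': "iso C b'" by (rule iso_intro[of _ b]) (use b' tb in simp_all)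
  have ic': "iso C c'" by (rule iso_intro[of _ c]) (use c' tc in simp_all)
  have q1: "b' \<cdot> x = d' \<cdot> c'"
    by (rule sq_inv[OF _ _ _ _ _ _ _ _ _ _ _ _ _ _ _ _ e2']) (use bx tb tc b' c' ty in simp_all)
  have q2: "a' \<cdot> y = i' \<cdot> b'"
    by (rule sq_inv[OF _ _ _ _ _ _ _ _ _ _ _ _ _ _ _ _ e1']) (use bx ta tb a' b' ty in simp_all)
  have "(d', i') \<in> W"
  proof (rule W_iso[OF xy(1), of d' i' c' b' a'])
    show "b' \<cdot> x = d' \<cdot> c'" by (rule q1)
    show "a' \<cdot> y = i' \<cdot> b'" by (rule q2)
  qed (use ty ta tb tc a' b' c' ia' ib' ic' bx in \<open>simp_all add: hom_iff\<close>)
  then show "(i', d') \<in> prod.swap ` W" by (intro image_eqI[where x="(d', i')"]) simp_all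
qed

lemma op_sum_clause: assumes xyW: "(x,y) \<in> W" and xyW': "(x',y') \<in> W"
  shows "biprod (opc C) (Dom (opc C) y) (Dom (opc C) y') SA a1 a2 r1 r2 \<and>
        biprod (opc C) (Cod (opc C) y) (Cod (opc C) y') SB b1 b2 s1 s2 \<and>
        biprod (opc C) (Cod (opc C) x) (Cod (opc C) x') SC c1 c2 t1 t2 \<longrightarrow>
        (dsum (opc C) r1 r2 b1 b2 y y', dsum (opc C) s1 s2 c1 c2 x x') \<in> prod.swap ` W"
proof (intro impI, elim conjE)
  assume hA: "biprod (opc C) (Dom (opc C) y) (Dom (opc C) y') SA a1 a2 r1 r2"
      and hB: "biprod (opc C) (Cod (opc C) y) (Cod (opc C) y') SB b1 b2 s1 s2"
      and hC: "biprod (opc C) (Cod (opc C) x) (Cod (opc C) x') SC c1 c2 t1 t2"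
  have xy: "(x,y) \<in> W" by (rule xyW)
  have xy': "(x',y') \<in> W" by (rule xyW')
  note bx = ker_basic[OF W_kc[OF xy(1), unfolded kcpair_def, THEN conjunct1]]
  note bx' = ker_basic[OF W_kc[OF xy'(1), unfolded kcpair_def, THEN conjunct1]]
  have A: "biprod C (Cod C y) (Cod C y') SA r1 r2 a1 a2" using hA xy xy' by (simp add: biprod_op)
  have B: "biprod C (Dom C y) (Dom C y') SB s1 s2 b1 b2" using hB xy xy' by (simp add: biprod_op)
  have Cc: "biprod C (Dom C x) (Dom C x') SC t1 t2 c1 c2" using hC xy xy' by (simp add: biprod_op)
  have B': "biprod C (Cod C x) (Cod C x') SB s1 s2 b1 b2" using B bx bx' by simp
  have "(dsum C c1 c2 s1 s2 x x', dsum C b1 b2 r1 r2 y y') \<in> W"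
    by (rule W_sum[OF xy(1) xy'(1) Cc B' A])
  moreover have "dsum (opc C) s1 s2 c1 c2 x x' = dsum C c1 c2 s1 s2 x x'"
    using bx bx' bp_basic[OF Cc] bp_basic[OF B'] by (intro dsum_op) simp_all
  moreover have "dsum (opc C) r1 r2 b1 b2 y y' = dsum C b1 b2 r1 r2 y y'"
    using bx bx' bp_basic[OF B] bp_basic[OF A] by (intro dsum_op) simp_all
  ultimately show "(dsum (opc C) r1 r2 b1 b2 y y', dsum (opc C) s1 s2 c1 c2 x x') \<in> prod.swap ` W"
    by (intro image_eqI[where x="(dsum C c1 c2 s1 s2 x x', dsum C b1 b2 r1 r2 y y')"]) simp_all
qed

lemma wex_op: "weakly_exact (opc C) (prod.swap ` W)"
  unfolding weakly_exact_def adm_swap pos_op pbs_op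
proof (intro conjI)
  show "\<forall>(i, d)\<in>prod.swap ` W. kcpair (opc C) i d" using W_kc by (auto simp: kc_op)
  show "\<forall>Z. zero_obj (opc C) Z \<longrightarrow> (Id (opc C) Z, Id (opc C) Z) \<in> prod.swap ` W"
  proof (intro allI impI)
    fix Z assume "zero_obj (opc C) Z"
    then have "(Id C Z, Id C Z) \<in> W" using wx3 by simp
    then show "(Id (opc C) Z, Id (opc C) Z) \<in> prod.swap ` W"
      by (intro image_eqI[where x="(Id C Z, Id C Z)"]) simp_all
  qed
  show "\<forall>X\<in>Obj (opc C). Id (opc C) X \<in> DD" using E0op by auto
  show "\<forall>X\<in>Obj (opc C). Id (opc C) X \<in> II" using E0 by auto
  show "pullback_stable C DD" by (rule E2op)
  show "pushout_stable C II" by (rule E2)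
  show "\<forall>(i, d)\<in>prod.swap ` W. \<forall>i' d' a b c. i' \<in> Arr (opc C) \<and> d' \<in> Arr (opc C) \<and> Cod (opc C) i' = Dom (opc C) d' \<and>
        iso (opc C) a \<and> iso (opc C) b \<and> iso (opc C) c \<and>
        a \<in> hom (opc C) (Dom (opc C) i) (Dom (opc C) i') \<and> b \<in> hom (opc C) (Cod (opc C) i) (Cod (opc C) i') \<and>
        c \<in> hom (opc C) (Cod (opc C) d) (Cod (opc C) d') \<and>
        Comp (opc C) b i = Comp (opc C) i' a \<and> Comp (opc C) c d = Comp (opc C) d' b \<longrightarrow> (i',d') \<in> prod.swap ` W"
  proof
    fix p assume "p \<in> prod.swap ` W"
    then obtain x y where xy: "(x,y) \<in> W" "p = (y,x)" by auto
    show "case p of (i, d) \<Rightarrow> \<forall>i' d' a b c. i' \<in> Arr (opc C) \<and> d' \<in> Arr (opc C) \<and> Cod (opc C) i' = Dom (opc C) d' \<and>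
        iso (opc C) a \<and> iso (opc C) b \<and> iso (opc C) c \<and>
        a \<in> hom (opc C) (Dom (opc C) i) (Dom (opc C) i') \<and> b \<in> hom (opc C) (Cod (opc C) i) (Cod (opc C) i') \<and>
        c \<in> hom (opc C) (Cod (opc C) d) (Cod (opc C) d') \<and>
        Comp (opc C) b i = Comp (opc C) i' a \<and> Comp (opc C) c d = Comp (opc C) d' b \<longrightarrow> (i',d') \<in> prod.swap ` W"
      unfolding xy(2) prod.case using op_iso_clause[OF xy(1)] by blast
  qed
  show "\<forall>(i, d)\<in>prod.swap ` W. \<forall>(i', d')\<in>prod.swap ` W. \<forall>SA a1 a2 r1 r2 SB b1 b2 s1 s2 SC c1 c2 t1 t2.
        biprod (opc C) (Dom (opc C) i) (Dom (opc C) i') SA a1 a2 r1 r2 \<and>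
        biprod (opc C) (Cod (opc C) i) (Cod (opc C) i') SB b1 b2 s1 s2 \<and>
        biprod (opc C) (Cod (opc C) d) (Cod (opc C) d') SC c1 c2 t1 t2 \<longrightarrow>
        (dsum (opc C) r1 r2 b1 b2 i i', dsum (opc C) s1 s2 c1 c2 d d') \<in> prod.swap ` W"
  proof
    fix p assume "p \<in> prod.swap ` W"
    then obtain x y where xy: "(x,y) \<in> W" "p = (y,x)" by auto
    show "case p of (i, d) \<Rightarrow> \<forall>(i', d')\<in>prod.swap ` W. \<forall>SA a1 a2 r1 r2 SB b1 b2 s1 s2 SC c1 c2 t1 t2.
        biprod (opc C) (Dom (opc C) i) (Dom (opc C) i') SA a1 a2 r1 r2 \<and>
        biprod (opc C) (Cod (opc C) i) (Cod (opc C) i') SB b1 b2 s1 s2 \<and>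
        biprod (opc C) (Cod (opc C) d) (Cod (opc C) d') SC c1 c2 t1 t2 \<longrightarrow>
        (dsum (opc C) r1 r2 b1 b2 i i', dsum (opc C) s1 s2 c1 c2 d d') \<in> prod.swap ` W"
      unfolding xy(2) prod.case
    proof
      fix p' assume "p' \<in> prod.swap ` W"
      then obtain x' y' where xy': "(x',y') \<in> W" "p' = (y',x')" by auto
      show "case p' of (i', d') \<Rightarrow> \<forall>SA a1 a2 r1 r2 SB b1 b2 s1 s2 SC c1 c2 t1 t2.
        biprod (opc C) (Dom (opc C) y) (Dom (opc C) i') SA a1 a2 r1 r2 \<and>
        biprod (opc C) (Cod (opc C) y) (Cod (opc C) i') SB b1 b2 s1 s2 \<and>
        biprod (opc C) (Cod (opc C) x) (Cod (opc C) d') SC c1 c2 t1 t2 \<longrightarrow>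
        (dsum (opc C) r1 r2 b1 b2 y i', dsum (opc C) s1 s2 c1 c2 x d') \<in> prod.swap ` W"
        unfolding xy'(2) prod.case using op_sum_clause[OF xy(1) xy'(1)] by blast
    qed
  qed
qed

end


theorem mainTheorem6:
  fixes C :: "('o,'m) addcat" and W :: "('m \<times> 'm) set"
  assumes "additive_category C" and "weakly_exact C W"
  shows "right_weakly_exact C (adm_monics W) \<and> left_weakly_exact C (adm_epics W) \<and>
         W = {(i,d). kcpair C i d \<and> i \<in> adm_monics W \<and> d \<in> adm_epics W}"
proof -
  interpret A: wexc C W
    by (intro wexc.intro addc.intro wexc_axioms.intro assms)
  have R: "right_weakly_exact C (adm_monics W)" by (rule A.R_all)
  interpret B: wexc "opc C" "prod.swap ` W"
    by (intro wexc.intro addc.intro wexc_axioms.intro A.op_additive A.wex_op)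
  have "right_weakly_exact (opc C) (adm_monics (prod.swap ` W))" by (rule B.R_all)
  then have RB: "right_weakly_exact (opc C) (adm_epics W)" by (simp add: adm_swap)
  have sub: "adm_epics W \<subseteq> Arr C"
  proof
    fix d assume "d \<in> adm_epics W"
    then obtain i where iW: "(i,d) \<in> W" using A.D_W by blast
    show "d \<in> Arr C" using A.ker_basic A.W_kc[OF iW] unfolding kcpair_def by blast
  qed
  have L: "left_weakly_exact C (adm_epics W)" by (rule A.left_from_op[OF RB sub])
  show ?thesis using R L A.W_char by simp
qed

end
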